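(* The algebra $\mathtt{A}_5^{\{3,4\}}$ is wild.
   Context: $\Bbbk$ is an algebraically closed field; arrows compose right to left. $\mathtt{A}_n$ is the algebra of the quiver with vertices $1,\dots,n$, arrows $a_i:i\to i+1$, $b_i:i+1\to i$ ($1\le i\le n-1$), relations $a_ib_i=b_{i+1}a_{i+1}$ ($1\le i\le n-2$), $a_{n-1}b_{n-1}=0$. For $X\subset\{2,\dots,n\}$, $e_X$ is the sum of primitive idempotents for vertices in $\{1\}\cup X$ and $\mathtt{A}_n^X=e_X\mathtt{A}_ne_X$. *)

theory Defs
  imports "HOL-Computational_Algebra.Polynomial" "Jordan_Normal_Form.Matrix"
begin

datatype arrow = Arr_a nat | Arr_b nat

fun arr_src :: "arrow \<Rightarrow> nat" where
  "arr_src (Arr_a i) = i" | "arr_src (Arr_b i) = Suc i"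
fun arr_tgt :: "arrow \<Rightarrow> nat" where
  "arr_tgt (Arr_a i) = Suc i" | "arr_tgt (Arr_b i) = i"

definition arrow_ok :: "nat \<Rightarrow> arrow \<Rightarrow> bool" where
  "arrow_ok n x \<longleftrightarrow> (case x of Arr_a i \<Rightarrow> 1 \<le> i \<and> i \<le> n - 1 | Arr_b i \<Rightarrow> 1 \<le> i \<and> i \<le> n - 1)"

text \<open>A path is a pair (start vertex, list of arrows in the order they are traversed).  Arrows compose right to left, so the product
  p q (q first, then p) is the path with traversal list (arrows of q) @ (arrows of p).\<close>
type_synonym path = "nat \<times> arrow list"

fun walk_ok :: "nat \<Rightarrow> nat \<Rightarrow> arrow list \<Rightarrow> bool" where
  "walk_ok n v [] \<longleftrightarrow> 1 \<le> v \<and> v \<le> n"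
| "walk_ok n v (x # xs) \<longleftrightarrow> 1 \<le> v \<and> v \<le> n \<and> arrow_ok n x \<and> arr_src x = v \<and> walk_ok n (arr_tgt x) xs"

fun walk_end :: "nat \<Rightarrow> arrow list \<Rightarrow> nat" where
  "walk_end v [] = v" | "walk_end v (x # xs) = walk_end (arr_tgt x) xs"

definition path_src :: "path \<Rightarrow> nat" where "path_src p = fst p"
definition path_tgt :: "path \<Rightarrow> nat" where "path_tgt p = walk_end (fst p) (snd p)"

text \<open>Paths of Q_n starting and ending in the vertex set V = {1} \<union> X; these form a
  basis of e_X kQ_n e_X.\<close>
definition vpath :: "nat \<Rightarrow> nat set \<Rightarrow> path \<Rightarrow> bool" where
  "vpath n V p \<longleftrightarrow> walk_ok n (fst p) (snd p) \<and> path_src p \<in> V \<and> path_tgt p \<in> V"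

text \<open>Product p q in the path algebra (q first, then p), for tgt q = src p.\<close>
definition path_mult :: "path \<Rightarrow> path \<Rightarrow> path" where
  "path_mult p q = (fst q, snd q @ snd p)"

text \<open>Relations of A_n as traversal lists: a_i b_i = [b_i, a_i], b_{i+1} a_{i+1} = [a_{i+1}, b_{i+1}].\<close>
definition comm_rel_l :: "nat \<Rightarrow> arrow list" where "comm_rel_l i = [Arr_b i, Arr_a i]"
definition comm_rel_r :: "nat \<Rightarrow> arrow list" where "comm_rel_r i = [Arr_a (Suc i), Arr_b (Suc i)]"
definition zero_rel :: "nat \<Rightarrow> arrow list" where "zero_rel n = [Arr_b (n - 1), Arr_a (n - 1)]"

definition vset :: "nat set \<Rightarrow> nat set" where "vset X = insert 1 X"

text \<open>A finite-dimensional (left) module over e_X A_n e_X = e_X kQ e_X / e_X I e_X on k^d is given by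
  a unital algebra homomorphism into d x d matrices; by linearity it is determined by its values R p
  on the basis of paths between vertices of V.\<close>
definition is_rep :: "nat \<Rightarrow> nat set \<Rightarrow> nat \<Rightarrow> (path \<Rightarrow> 'k::field mat) \<Rightarrow> bool" where
  "is_rep n X d R \<longleftrightarrow>
     (\<forall>p. vpath n (vset X) p \<longrightarrow> R p \<in> carrier_mat d d)
   \<and> (\<forall>p q. vpath n (vset X) p \<longrightarrow> vpath n (vset X) q \<longrightarrow>
        (if path_tgt q = path_src p then R (path_mult p q) = R p * R q else R p * R q = 0\<^sub>m d d))
   \<and> mat d d (\<lambda>(i, j). \<Sum>v\<in>vset X. R (v, []) $$ (i, j)) = 1\<^sub>m d
   \<and> (\<forall>v pre post i. 1 \<le> i \<and> i \<le> n - 2 \<longrightarrow> vpath n (vset X) (v, pre @ comm_rel_l i @ post) \<longrightarrow>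
        R (v, pre @ comm_rel_l i @ post) = R (v, pre @ comm_rel_r i @ post))
   \<and> (\<forall>v pre post. vpath n (vset X) (v, pre @ zero_rel n @ post) \<longrightarrow>
        R (v, pre @ zero_rel n @ post) = 0\<^sub>m d d)"


definition rep_iso :: "nat \<Rightarrow> nat set \<Rightarrow> nat \<Rightarrow> (path \<Rightarrow> 'k::field mat) \<Rightarrow> nat \<Rightarrow> (path \<Rightarrow> 'k mat) \<Rightarrow> bool" where
  "rep_iso n X d R d' R' \<longleftrightarrow> d = d' \<and>
     (\<exists>S T. S \<in> carrier_mat d d \<and> T \<in> carrier_mat d d \<and> S * T = 1\<^sub>m d \<and> T * S = 1\<^sub>m d \<and>
        (\<forall>p. vpath n (vset X) p \<longrightarrow> S * R p = R' p * S))"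

definition rep_indec :: "nat \<Rightarrow> nat set \<Rightarrow> nat \<Rightarrow> (path \<Rightarrow> 'k::field mat) \<Rightarrow> bool" where
  "rep_indec n X d R \<longleftrightarrow> d > 0 \<and>
     (\<forall>E. E \<in> carrier_mat d d \<longrightarrow> (\<forall>p. vpath n (vset X) p \<longrightarrow> E * R p = R p * E) \<longrightarrow> E * E = E \<longrightarrow>
        E = 0\<^sub>m d d \<or> E = 1\<^sub>m d)"

text \<open>A k<x,y>-module on k^m is a pair (X, Y) of m x m matrices.  Words in x, y are
  bool lists (True = x, False = y); the word u @ v is the product u v.\<close>
fun word_eval :: "nat \<Rightarrow> 'k::field mat \<Rightarrow> 'k mat \<Rightarrow> bool list \<Rightarrow> 'k mat" where
  "word_eval m A B [] = 1\<^sub>m m"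
| "word_eval m A B (c # w) = (if c then A else B) * word_eval m A B w"

definition kxy_iso :: "nat \<Rightarrow> 'k::field mat \<Rightarrow> 'k mat \<Rightarrow> nat \<Rightarrow> 'k mat \<Rightarrow> 'k mat \<Rightarrow> bool" where
  "kxy_iso m A B m' A' B' \<longleftrightarrow> m = m' \<and>
     (\<exists>S T. S \<in> carrier_mat m m \<and> T \<in> carrier_mat m m \<and> S * T = 1\<^sub>m m \<and> T * S = 1\<^sub>m m \<and>
        S * A = A' * S \<and> S * B = B' * S)"

definition kxy_indec :: "nat \<Rightarrow> 'k::field mat \<Rightarrow> 'k mat \<Rightarrow> bool" where
  "kxy_indec m A B \<longleftrightarrow> m > 0 \<and>
     (\<forall>E. E \<in> carrier_mat m m \<longrightarrow> E * A = A * E \<longrightarrow> E * B = B * E \<longrightarrow> E * E = E \<longrightarrow>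
        E = 0\<^sub>m m m \<or> E = 1\<^sub>m m)"

text \<open>An (A_n^X, k<x,y>)-bimodule M which is free of rank r as right k<x,y>-module is given by a unital
  algebra homomorphism A_n^X -> M_r(k<x,y>).  We write the image of the path p as
  \<Sum>_w C p w \<cdot> w with C p w \<in> k^{r x r} and only finitely many w with C p w \<noteq> 0.
  The homomorphism conditions are the same as in is_rep, with products in M_r(k<x,y>).\<close>
definition is_bimod :: "nat \<Rightarrow> nat set \<Rightarrow> nat \<Rightarrow> (path \<Rightarrow> bool list \<Rightarrow> 'k::field mat) \<Rightarrow> bool" where
  "is_bimod n X r C \<longleftrightarrow>
     (\<forall>p w. vpath n (vset X) p \<longrightarrow> C p w \<in> carrier_mat r r)
   \<and> (\<forall>p. vpath n (vset X) p \<longrightarrow> finite {w. C p w \<noteq> 0\<^sub>m r r})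
   \<and> (\<forall>p q w. vpath n (vset X) p \<longrightarrow> vpath n (vset X) q \<longrightarrow>
        mat r r (\<lambda>(i, j). \<Sum>l\<in>{0..length w}. (C p (take l w) * C q (drop l w)) $$ (i, j))
        = (if path_tgt q = path_src p then C (path_mult p q) w else 0\<^sub>m r r))
   \<and> (\<forall>w. mat r r (\<lambda>(i, j). \<Sum>v\<in>vset X. C (v, []) w $$ (i, j)) = (if w = [] then 1\<^sub>m r else 0\<^sub>m r r))
   \<and> (\<forall>v pre post i w. 1 \<le> i \<and> i \<le> n - 2 \<longrightarrow> vpath n (vset X) (v, pre @ comm_rel_l i @ post) \<longrightarrow>
        C (v, pre @ comm_rel_l i @ post) w = C (v, pre @ comm_rel_r i @ post) w)
   \<and> (\<forall>v pre post w. vpath n (vset X) (v, pre @ zero_rel n @ post) \<longrightarrow>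
        C (v, pre @ zero_rel n @ post) w = 0\<^sub>m r r)"

text \<open>The functor M \<otimes>_{k<x,y>} - applied to the module (A, B) on k^m: the module on k^(r m) = (k^m)^r
  where the path p acts by the r x r block matrix whose (i, j) block is \<Sum>_w (C p w)_{ij} w(A, B).\<close>
definition tensor_rep :: "nat \<Rightarrow> (path \<Rightarrow> bool list \<Rightarrow> 'k::field mat) \<Rightarrow> nat \<Rightarrow> 'k mat \<Rightarrow> 'k mat \<Rightarrow> path \<Rightarrow> 'k mat" where
  "tensor_rep r C m A B p = mat (r * m) (r * m) (\<lambda>(i, j).
      \<Sum>w\<in>{w. C p w \<noteq> 0\<^sub>m r r}. C p w $$ (i div m, j div m) * word_eval m A B w $$ (i mod m, j mod m))"

text \<open>Wildness (Drozd): there is a bimodule M, free of finite rank as right k<x,y>-module, such that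
  M \<otimes> - (on finite-dimensional modules) preserves indecomposability and reflects isomorphism classes.\<close>
definition wild :: "nat \<Rightarrow> nat set \<Rightarrow> 'k::field itself \<Rightarrow> bool" where
  "wild n X (TYPE('k)) \<longleftrightarrow> (\<exists>r (C :: path \<Rightarrow> bool list \<Rightarrow> 'k mat). is_bimod n X r C
     \<and> (\<forall>m A B. A \<in> carrier_mat m m \<longrightarrow> B \<in> carrier_mat m m \<longrightarrow> kxy_indec m A B \<longrightarrow>
          rep_indec n X (r * m) (tensor_rep r C m A B))
     \<and> (\<forall>m A B m' A' B'. A \<in> carrier_mat m m \<longrightarrow> B \<in> carrier_mat m m \<longrightarrow>
          A' \<in> carrier_mat m' m' \<longrightarrow> B' \<in> carrier_mat m' m' \<longrightarrow>
          rep_iso n X (r * m) (tensor_rep r C m A B) (r * m') (tensor_rep r C m' A' B') \<longrightarrow>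
          kxy_iso m A B m' A' B'))"

end

theory Submission
  imports Defs
begin
definition pm :: "(nat \<times> nat) list \<Rightarrow> 'k::field mat" where
  "pm L = mat 11 11 (\<lambda>(i,j). if (i,j) \<in> set L then 1 else 0)"

definition lcomp :: "(nat \<times> nat) list \<Rightarrow> (nat \<times> nat) list \<Rightarrow> (nat \<times> nat) list" where
  "lcomp L1 L2 = concat (map (\<lambda>(i,k). map (\<lambda>(k',j). (i,j)) (filter (\<lambda>(k',j). k' = k) L2)) L1)"

definition bnd :: "(nat \<times> nat) list \<Rightarrow> bool" where
  "bnd L \<longleftrightarrow> (\<forall>(i,j)\<in>set L. i < 11 \<and> j < 11)"

lemma pm_carrier[simp]: "pm L \<in> carrier_mat 11 11"
  by (simp add: pm_def)

lemma pm_dims[simp]: "dim_row (pm L) = 11" "dim_col (pm L) = 11"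
  by (simp_all add: pm_def)

lemma pm_index[simp]: "i < 11 \<Longrightarrow> j < 11 \<Longrightarrow> pm L $$ (i,j) = (if (i,j) \<in> set L then 1 else 0)"
  by (simp add: pm_def)

lemma set_lcomp: "set (lcomp L1 L2) = {(i,j). \<exists>k. (i,k) \<in> set L1 \<and> (k,j) \<in> set L2}"
  unfolding lcomp_def by force

lemma pm_mult:
  assumes b1: "bnd L1" and b2: "bnd L2" and d: "distinct (map fst L1)"
  shows "(pm L1 :: 'k::field mat) * pm L2 = pm (lcomp L1 L2)"
proof (rule eq_matI)
  fix i j assume i: "i < dim_row (pm (lcomp L1 L2) :: 'k mat)" and j: "j < dim_col (pm (lcomp L1 L2) :: 'k mat)"
  hence i': "i < 11" and j': "j < 11" by auto
  have "(pm L1 * pm L2 :: 'k mat) $$ (i,j) = (\<Sum>k<11. (if (i,k) \<in> set L1 then 1 else 0) * (if (k,j) \<in> set L2 then 1 else 0))"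
    using i' j' by (simp add: scalar_prod_def atLeast0LessThan)
  also have "\<dots> = (\<Sum>k<11. if map_of L1 i = Some k then (if (k,j) \<in> set L2 then 1 else (0::'k)) else 0)"
    by (rule sum.cong) (auto simp: d)
  also have "\<dots> = (if (\<exists>k. (i,k) \<in> set L1 \<and> (k,j) \<in> set L2) then 1 else 0)"
  proof (cases "map_of L1 i")
    case None
    hence "\<not>(\<exists>k. (i,k) \<in> set L1)" by (force simp: map_of_eq_None_iff)
    then show ?thesis using None by simp
  next
    case (Some k0)
    hence k0: "(i,k0) \<in> set L1" using d by simp
    hence "k0 < 11" using b1 by (auto simp: bnd_def)
    moreover have "(\<exists>k. (i,k) \<in> set L1 \<and> (k,j) \<in> set L2) \<longleftrightarrow> (k0,j) \<in> set L2"
      using k0 d by (metis Some map_of_eq_Some_iff option.inject)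
    ultimately show ?thesis using Some by (simp add: sum.delta)
  qed
  also have "\<dots> = pm (lcomp L1 L2) $$ (i,j)"
    using i' j' by (simp add: set_lcomp)
  finally show "(pm L1 * pm L2 :: 'k mat) $$ (i,j) = pm (lcomp L1 L2) $$ (i,j)" .
qed auto

lemma pm_eqI: "set L1 = set L2 \<Longrightarrow> pm L1 = pm L2"
  by (simp add: pm_def)

lemma pm_Nil: "pm [] = 0\<^sub>m 11 11"
  by (rule eq_matI) auto

definition LE :: "(nat \<times> nat) list" where "LE = [(2,0),(3,1)]"
definition LA :: "(nat \<times> nat) list" where "LA = [(6,0),(7,1)]"
definition LB :: "(nat \<times> nat) list" where "LB = [(3,4)]"
definition LX :: "(nat \<times> nat) list" where "LX = [(2,4)]"
definition LY :: "(nat \<times> nat) list" where "LY = [(2,5)]"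
definition LG :: "(nat \<times> nat) list" where "LG = [(8,4),(9,5),(10,7)]"
definition LD :: "(nat \<times> nat) list" where "LD = [(6,8),(7,9)]"
definition Ld :: "(nat \<times> nat) list" where "Ld = [(6,4),(7,5)]"
definition Lc :: "(nat \<times> nat) list" where "Lc = [(10,9)]"
definition LP1 :: "(nat \<times> nat) list" where "LP1 = [(0,0),(1,1),(2,2),(3,3)]"
definition LP3 :: "(nat \<times> nat) list" where "LP3 = [(4,4),(5,5),(6,6),(7,7)]"
definition LP4 :: "(nat \<times> nat) list" where "LP4 = [(8,8),(9,9),(10,10)]"

lemmas Ldefs = LE_def LA_def LB_def LX_def LY_def LG_def LD_def Ld_def Lc_def LP1_def LP3_def LP4_def

lemma test1: "(pm LD :: 'k::field mat) * pm LG = pm Ld"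
  by (subst pm_mult) (auto simp: Ldefs bnd_def lcomp_def intro!: pm_eqI)

lemma test2: "(pm LE :: 'k::field mat) * pm LE = pm []"
  by (subst pm_mult) (auto simp: Ldefs bnd_def lcomp_def intro!: pm_eqI)

definition seg1 :: "arrow \<Rightarrow> (nat \<times> nat) list" where
  "seg1 x = (if x = Arr_a 3 then LG else if x = Arr_b 3 then LD else [])"

definition seg2 :: "arrow \<Rightarrow> arrow \<Rightarrow> (nat \<times> nat) list" where
  "seg2 x y = (if x = Arr_a 1 \<and> y = Arr_b 1 then LE else if x = Arr_a 1 \<and> y = Arr_a 2 then LA
     else if x = Arr_b 2 \<and> y = Arr_b 1 then LB else if x = Arr_b 2 \<and> y = Arr_a 2 then Ld
     else if x = Arr_a 4 \<and> y = Arr_b 4 then Lc else [])"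

fun Cw :: "arrow list \<Rightarrow> 'k::field mat" where
  "Cw [] = 1\<^sub>m 11"
| "Cw [x] = pm (seg1 x)"
| "Cw (x # y # r) = (if x = Arr_a 3 \<or> x = Arr_b 3 then Cw (y # r) * pm (seg1 x) else Cw r * pm (seg2 x y))"

lemma Cw_carrier[simp]: "(Cw ws :: 'k::field mat) \<in> carrier_mat 11 11"
proof (induction ws rule: Cw.induct)
  case (3 x y r)
  show ?case
  proof (cases "x = Arr_a 3 \<or> x = Arr_b 3")
    case True
    then show ?thesis using 3(1)[OF True] by simp
  next
    case False
    then show ?thesis using 3(2)[OF False] by simp
  qed
qed auto

lemma Cw_dims[simp]: "dim_row (Cw ws :: 'k::field mat) = 11" "dim_col (Cw ws :: 'k::field mat) = 11"
  using carrier_matD[OF Cw_carrier[of ws]] by auto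

lemma Cw_cons1: "x = Arr_a 3 \<or> x = Arr_b 3 \<Longrightarrow> (Cw (x # r) :: 'k::field mat) = Cw r * pm (seg1 x)"
  by (cases r) auto

lemma Cw_cons2: "\<not> (x = Arr_a 3 \<or> x = Arr_b 3) \<Longrightarrow> (Cw (x # y # r) :: 'k::field mat) = Cw r * pm (seg2 x y)"
  by simp

lemma walk_ok_append: "walk_ok n v (xs @ ys) \<longleftrightarrow> walk_ok n v xs \<and> walk_ok n (walk_end v xs) ys"
proof (induction xs arbitrary: v)
  case Nil
  then show ?case by (cases ys) auto
qed auto

lemma walk_end_append: "walk_end v (xs @ ys) = walk_end (walk_end v xs) ys"
  by (induction xs arbitrary: v) auto

lemma arrows5: "arrow_ok 5 x \<Longrightarrow> x \<in> {Arr_a 1, Arr_a 2, Arr_a 3, Arr_a 4, Arr_b 1, Arr_b 2, Arr_b 3, Arr_b 4}"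
proof (cases x)
  case (Arr_a i)
  moreover assume "arrow_ok 5 x"
  ultimately have "1 \<le> i \<and> i \<le> 4" by (simp add: arrow_ok_def)
  hence "i = 1 \<or> i = 2 \<or> i = 3 \<or> i = 4" by arith
  then show ?thesis using Arr_a by auto
next
  case (Arr_b i)
  moreover assume "arrow_ok 5 x"
  ultimately have "1 \<le> i \<and> i \<le> 4" by (simp add: arrow_ok_def)
  hence "i = 1 \<or> i = 2 \<or> i = 3 \<or> i = 4" by arith
  then show ?thesis using Arr_b by auto
qed

lemma arrow_ok5_simps[simp]:
  "arrow_ok 5 (Arr_a 1)" "arrow_ok 5 (Arr_a 2)" "arrow_ok 5 (Arr_a 3)" "arrow_ok 5 (Arr_a 4)"
  "arrow_ok 5 (Arr_b 1)" "arrow_ok 5 (Arr_b 2)" "arrow_ok 5 (Arr_b 3)" "arrow_ok 5 (Arr_b 4)"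
  by (simp_all add: arrow_ok_def)

lemma mult11[simp]: "(A::'k::field mat) \<in> carrier_mat 11 11 \<Longrightarrow> B \<in> carrier_mat 11 11 \<Longrightarrow> A * B \<in> carrier_mat 11 11"
  by simp

lemma mult_assoc11: "(A::'k::field mat) \<in> carrier_mat 11 11 \<Longrightarrow> B \<in> carrier_mat 11 11 \<Longrightarrow> C \<in> carrier_mat 11 11
  \<Longrightarrow> A * B * C = A * (B * C)"
  by (rule assoc_mult_mat) auto

lemma Cw_split:
  "walk_ok 5 v ws \<Longrightarrow> v \<in> {1,3,4} \<Longrightarrow> walk_end v ws \<in> {1,3,4} \<Longrightarrow>
   (Cw (ws @ ws2) :: 'k::field mat) = Cw ws2 * Cw ws"
proof (induction ws arbitrary: v rule: Cw.induct)
  case 1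
  then show ?case by simp
next
  case (2 x)
  have "x \<in> {Arr_a 3, Arr_b 3}"
    using 2 arrows5[of x] by auto
  then show ?case by (simp add: Cw_cons1)
next
  case (3 x y r)
  show ?case
  proof (cases "x = Arr_a 3 \<or> x = Arr_b 3")
    case True
    have w: "walk_ok 5 (arr_tgt x) (y # r)" using "3.prems" by simp
    have t: "arr_tgt x \<in> {1,3,4}" using True by auto
    have e: "walk_end (arr_tgt x) (y # r) \<in> {1,3,4}" using "3.prems" by simp
    have "(Cw ((x # y # r) @ ws2) :: 'k mat) = Cw ((y # r) @ ws2) * pm (seg1 x)"
      using True by simp
    also have "\<dots> = Cw ws2 * Cw (y # r) * pm (seg1 x)"
      using "3.IH"(1)[OF True w t e] by simp
    also have "\<dots> = Cw ws2 * Cw (x # y # r)"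
      using True by (simp add: mult_assoc11)
    finally show ?thesis .
  next
    case False
    have ok: "arrow_ok 5 x" "arrow_ok 5 y" "arr_src x = v" "arr_src y = arr_tgt x" "v \<in> {1,3,4}"
      using "3.prems" by auto
    have t: "arr_tgt y \<in> {1,3,4}"
      using arrows5[OF ok(1)] arrows5[OF ok(2)] ok(3-5) False by auto
    have w: "walk_ok 5 (arr_tgt y) r" using "3.prems" by simp
    have e: "walk_end (arr_tgt y) r \<in> {1,3,4}" using "3.prems" by simp
    have "(Cw ((x # y # r) @ ws2) :: 'k mat) = Cw (r @ ws2) * pm (seg2 x y)"
      using False by simp
    also have "\<dots> = Cw ws2 * Cw r * pm (seg2 x y)"
      using "3.IH"(2)[OF False w t e] by simp
    also have "\<dots> = Cw ws2 * Cw (x # y # r)"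
      using False by (simp add: mult_assoc11)
    finally show ?thesis .
  qed
qed

definition LPv :: "nat \<Rightarrow> (nat \<times> nat) list" where
  "LPv v = (if v = 1 then LP1 else if v = 3 then LP3 else if v = 4 then LP4 else [])"

abbreviation Pv :: "nat \<Rightarrow> 'k::field mat" where "Pv v \<equiv> pm (LPv v)"

lemmas pmsimps = pm_mult bnd_def lcomp_def Ldefs LPv_def seg1_def seg2_def

lemma pm_mult_zero: "bnd L1 \<Longrightarrow> bnd L2 \<Longrightarrow> distinct (map fst L1) \<Longrightarrow> lcomp L1 L2 = [] \<Longrightarrow> (pm L1 :: 'k::field mat) * pm L2 = 0\<^sub>m 11 11"
  by (simp add: pm_mult pm_Nil)

lemma walk_ok_Cons: "walk_ok n v (x # xs) \<longleftrightarrow> 1 \<le> v \<and> v \<le> n \<and> arrow_ok n x \<and> arr_src x = v \<and> walk_ok n (arr_tgt x) xs"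
  by simp

lemma seg2_tgt:
  assumes "x \<in> {Arr_a 1, Arr_b 2, Arr_a 4}" "arrow_ok 5 y" "arr_src y = arr_tgt x"
  shows "(Pv (arr_tgt y) :: 'k::field mat) * pm (seg2 x y) = pm (seg2 x y)"
proof -
  have "y \<in> {Arr_a 1, Arr_a 2, Arr_a 3, Arr_a 4, Arr_b 1, Arr_b 2, Arr_b 3, Arr_b 4}" using arrows5[OF assms(2)] .
  then show ?thesis using assms(1,3)
    by (auto simp: pmsimps intro!: pm_eqI)
qed

lemma seg1_tgt:
  assumes "x \<in> {Arr_a 3, Arr_b 3}"
  shows "(Pv (arr_tgt x) :: 'k::field mat) * pm (seg1 x) = pm (seg1 x)"
  using assms by (auto simp: pmsimps intro!: pm_eqI)

lemma Pv_idem: "v \<in> {1,3,4} \<Longrightarrow> (Pv u :: 'k::field mat) * Pv v = (if u = v then Pv v else 0\<^sub>m 11 11)"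
  by (auto simp: pmsimps pm_Nil intro!: pm_eqI)

lemma zero11_mult[simp]: "(A :: 'k::field mat) \<in> carrier_mat 11 11 \<Longrightarrow> 0\<^sub>m 11 11 * A = 0\<^sub>m 11 11"
  by (rule left_mult_zero_mat) auto

lemma mult_zero11[simp]: "(A :: 'k::field mat) \<in> carrier_mat 11 11 \<Longrightarrow> A * 0\<^sub>m 11 11 = 0\<^sub>m 11 11"
  by (rule right_mult_zero_mat) auto

lemma Pv_Cw:
  "walk_ok 5 v ws \<Longrightarrow> v \<in> {1,3,4} \<Longrightarrow> walk_end v ws \<in> {1,3,4} \<Longrightarrow> u \<in> {1,3,4} \<Longrightarrow>
   (Pv u :: 'k::field mat) * (Cw ws * Pv v) = (if u = walk_end v ws then Cw ws * Pv v else 0\<^sub>m 11 11)"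
proof (induction ws arbitrary: v rule: Cw.induct)
  case 1
  then show ?case using Pv_idem[of v u, where 'k='k] by simp
next
  case (2 x)
  have x: "x \<in> {Arr_a 3, Arr_b 3}" and sv: "arr_src x = v"
    using 2 arrows5[of x] by auto
  have u: "u \<in> {1,3,4}" using 2 by simp
  show ?case using x sv u by (auto simp: pmsimps pm_Nil intro!: pm_eqI)
next
  case (3 x y r)
  show ?case
  proof (cases "x = Arr_a 3 \<or> x = Arr_b 3")
    case True
    let ?t = "arr_tgt x"
    have w: "walk_ok 5 ?t (y # r)" using "3.prems" by simp
    have t: "?t \<in> {1,3,4}" using True by auto
    have e: "walk_end ?t (y # r) \<in> {1,3,4}" using "3.prems" by simp
    have IH: "(Pv u :: 'k mat) * (Cw (y # r) * Pv ?t) = (if u = walk_end ?t (y # r) then Cw (y # r) * Pv ?t else 0\<^sub>m 11 11)"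
      using "3.IH"(1)[OF True w t e "3.prems"(4)] .
    have G: "(pm (seg1 x) :: 'k mat) = Pv ?t * pm (seg1 x)" using seg1_tgt[of x, where 'k='k] True by simp
    have "(Pv u :: 'k mat) * (Cw (x # y # r) * Pv v) = Pv u * (Cw (y # r) * pm (seg1 x) * Pv v)"
      using True by simp
    also have "\<dots> = (Pv u * (Cw (y # r) * Pv ?t)) * (pm (seg1 x) * Pv v)"
      by (subst G) (simp add: mult_assoc11)
    also have "\<dots> = (if u = walk_end ?t (y # r) then Cw (y # r) * Pv ?t * (pm (seg1 x) * Pv v) else 0\<^sub>m 11 11)"
      using IH by simp
    also have "\<dots> = (if u = walk_end ?t (y # r) then Cw (y # r) * pm (seg1 x) * Pv v else 0\<^sub>m 11 11)"
      by (subst (2) G) (simp add: mult_assoc11)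
    finally show ?thesis using True "3.prems" by simp
  next
    case False
    have ok: "arrow_ok 5 x" "arrow_ok 5 y" "arr_src x = v" "arr_src y = arr_tgt x" "v \<in> {1,3,4}"
      using "3.prems" by auto
    have xs: "x \<in> {Arr_a 1, Arr_b 2, Arr_a 4}"
      using arrows5[OF ok(1)] ok(3,5) False by auto
    let ?t = "arr_tgt y"
    have t: "?t \<in> {1,3,4}"
      using arrows5[OF ok(1)] arrows5[OF ok(2)] ok(3-5) False by auto
    have w: "walk_ok 5 ?t r" using "3.prems" by simp
    have e: "walk_end ?t r \<in> {1,3,4}" using "3.prems" by simp
    have IH: "(Pv u :: 'k mat) * (Cw r * Pv ?t) = (if u = walk_end ?t r then Cw r * Pv ?t else 0\<^sub>m 11 11)"
      using "3.IH"(2)[OF False w t e "3.prems"(4)] .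
    have G: "(pm (seg2 x y) :: 'k mat) = Pv ?t * pm (seg2 x y)" using seg2_tgt[OF xs ok(2,4), where 'k='k] by simp
    have "(Pv u :: 'k mat) * (Cw (x # y # r) * Pv v) = Pv u * (Cw r * pm (seg2 x y) * Pv v)"
      using False by simp
    also have "\<dots> = (Pv u * (Cw r * Pv ?t)) * (pm (seg2 x y) * Pv v)"
      by (subst G) (simp add: mult_assoc11)
    also have "\<dots> = (if u = walk_end ?t r then Cw r * Pv ?t * (pm (seg2 x y) * Pv v) else 0\<^sub>m 11 11)"
      using IH by simp
    also have "\<dots> = (if u = walk_end ?t r then Cw r * pm (seg2 x y) * Pv v else 0\<^sub>m 11 11)"
      by (subst (2) G) (simp add: mult_assoc11)
    finally show ?thesis using False "3.prems" by simp
  qed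
qed

lemma mult_pm_col0:
  assumes "(A::'k::field mat) \<in> carrier_mat 11 11" "i < 11" "c < 11" "\<forall>k. (k,c) \<notin> set L"
  shows "(A * pm L) $$ (i,c) = 0"
  using assms by (auto simp: scalar_prod_def intro!: sum.neutral)

lemma mult_row0:
  assumes "(A::'k::field mat) \<in> carrier_mat 11 11" "B \<in> carrier_mat 11 11" "j < 11" "r < 11" "\<forall>k<11. A $$ (r,k) = 0"
  shows "(A * B) $$ (r,j) = 0"
  using assms by (auto simp: scalar_prod_def intro!: sum.neutral)

lemma Cw_col23: "ws \<noteq> [] \<Longrightarrow> i < 11 \<Longrightarrow> (Cw ws :: 'k::field mat) $$ (i,2) = 0 \<and> (Cw ws :: 'k::field mat) $$ (i,3) = 0"
proof (cases ws rule: Cw.cases)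
  case (2 x)
  assume "i < 11"
  then show ?thesis using 2 by (auto simp: seg1_def Ldefs)
next
  case (3 x y r)
  assume i: "i < 11"
  obtain M L where hM: "(Cw ws :: 'k mat) = M * pm L" "M \<in> carrier_mat 11 11" "\<forall>k. (k,2) \<notin> set L \<and> (k,3) \<notin> set L"
  proof (cases "x = Arr_a 3 \<or> x = Arr_b 3")
    case True
    show ?thesis by (rule that[of "Cw (y # r)" "seg1 x"]) (use 3 True in \<open>auto simp: seg1_def Ldefs\<close>)
  next
    case False
    show ?thesis by (rule that[of "Cw r" "seg2 x y"]) (use 3 False in \<open>auto simp: seg2_def Ldefs\<close>)
  qed
  have "(M * pm L) $$ (i,2) = 0" by (rule mult_pm_col0) (use hM i in auto)
  moreover have "(M * pm L) $$ (i,3) = 0" by (rule mult_pm_col0) (use hM i in auto)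
  ultimately show ?thesis using hM(1) by simp
qed auto

lemma Cw_row45: "ws \<noteq> [] \<Longrightarrow> \<forall>j<11. (Cw ws :: 'k::field mat) $$ (4,j) = 0 \<and> (Cw ws :: 'k::field mat) $$ (5,j) = 0"
proof (induction ws rule: Cw.induct)
  case (2 x)
  then show ?case by (auto simp: seg1_def Ldefs)
next
  case (3 x y r)
  show ?case
  proof (cases "x = Arr_a 3 \<or> x = Arr_b 3")
    case True
    have h: "\<forall>k<11. (Cw (y # r) :: 'k mat) $$ (4,k) = 0" "\<forall>k<11. (Cw (y # r) :: 'k mat) $$ (5,k) = 0"
      using "3.IH"(1)[OF True] by auto
    show ?thesis
    proof (intro allI impI)
      fix j :: nat assume j: "j < 11"
      show "(Cw (x # y # r) :: 'k mat) $$ (4,j) = 0 \<and> (Cw (x # y # r) :: 'k mat) $$ (5,j) = 0"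
        using True mult_row0[where 'k='k, OF Cw_carrier pm_carrier j, of 4 "y # r" "seg1 x"]
          mult_row0[where 'k='k, OF Cw_carrier pm_carrier j, of 5 "y # r" "seg1 x"] h by simp
    qed
  next
    case False
    show ?thesis
    proof (cases "r = []")
      case True
      then show ?thesis using False by (auto simp: seg2_def Ldefs)
    next
      case rne: False
      have h: "\<forall>k<11. (Cw r :: 'k mat) $$ (4,k) = 0" "\<forall>k<11. (Cw r :: 'k mat) $$ (5,k) = 0"
        using "3.IH"(2)[OF False rne] by auto
      show ?thesis
      proof (intro allI impI)
        fix j :: nat assume j: "j < 11"
        show "(Cw (x # y # r) :: 'k mat) $$ (4,j) = 0 \<and> (Cw (x # y # r) :: 'k mat) $$ (5,j) = 0"
          using False mult_row0[where 'k='k, OF Cw_carrier pm_carrier j, of 4 r "seg2 x y"]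
            mult_row0[where 'k='k, OF Cw_carrier pm_carrier j, of 5 r "seg2 x y"] h by simp
      qed
    qed
  qed
qed auto

lemma pmX_left0:
  assumes "(M::'k::field mat) \<in> carrier_mat 11 11" "\<forall>j<11. M $$ (4,j) = 0"
  shows "pm LX * M = 0\<^sub>m 11 11"
  by (rule eq_matI) (use assms in \<open>auto simp: scalar_prod_def LX_def intro!: sum.neutral\<close>)

lemma pmY_left0:
  assumes "(M::'k::field mat) \<in> carrier_mat 11 11" "\<forall>j<11. M $$ (5,j) = 0"
  shows "pm LY * M = 0\<^sub>m 11 11"
  by (rule eq_matI) (use assms in \<open>auto simp: scalar_prod_def LY_def intro!: sum.neutral\<close>)

lemma pmX_right0:
  assumes "(M::'k::field mat) \<in> carrier_mat 11 11" "\<forall>i<11. M $$ (i,2) = 0"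
  shows "M * pm LX = 0\<^sub>m 11 11"
  by (rule eq_matI) (use assms in \<open>auto simp: scalar_prod_def LX_def intro!: sum.neutral\<close>)

lemma pmY_right0:
  assumes "(M::'k::field mat) \<in> carrier_mat 11 11" "\<forall>i<11. M $$ (i,2) = 0"
  shows "M * pm LY = 0\<^sub>m 11 11"
  by (rule eq_matI) (use assms in \<open>auto simp: scalar_prod_def LY_def intro!: sum.neutral\<close>)

definition Xm :: "bool \<Rightarrow> 'k::field mat" where "Xm b = (if b then pm LX else pm LY)"

lemma Xm_carrier[simp]: "Xm b \<in> carrier_mat 11 11" by (simp add: Xm_def)

lemma Cw_Xm: "ws \<noteq> [] \<Longrightarrow> (Cw ws :: 'k::field mat) * Xm b = 0\<^sub>m 11 11"
  using Cw_col23[of ws, where 'k='k] by (auto simp: Xm_def intro!: pmX_right0 pmY_right0)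

lemma Xm_Cw: "ws \<noteq> [] \<Longrightarrow> Xm b * (Cw ws :: 'k::field mat) = 0\<^sub>m 11 11"
  using Cw_row45[of ws, where 'k='k] by (auto simp: Xm_def intro!: pmX_left0 pmY_left0)

lemma Pv_Xm: "v \<in> {1,3,4} \<Longrightarrow> (Pv v :: 'k::field mat) * Xm b = (if v = 1 then Xm b else 0\<^sub>m 11 11)"
  by (auto simp: Xm_def pmsimps pm_Nil intro!: pm_eqI)

lemma Xm_Pv: "v \<in> {1,3,4} \<Longrightarrow> Xm b * (Pv v :: 'k::field mat) = (if v = 3 then Xm b else 0\<^sub>m 11 11)"
  by (auto simp: Xm_def pmsimps pm_Nil intro!: pm_eqI)

lemma Xm_Xm: "Xm a * (Xm b :: 'k::field mat) = 0\<^sub>m 11 11"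
  by (auto simp: Xm_def pmsimps pm_Nil intro!: pm_eqI)

definition bw :: "arrow list" where "bw = [Arr_b 2, Arr_b 1]"

definition Cb :: "path \<Rightarrow> bool list \<Rightarrow> 'k::field mat" where
  "Cb p w = (if w = [] then Cw (snd p) * Pv (fst p)
     else if snd p = bw \<and> length w = 1 then Xm (hd w) else 0\<^sub>m 11 11)"

lemma Cb_carrier[simp]: "Cb p w \<in> carrier_mat 11 11"
  by (simp add: Cb_def)

lemma conv:
  fixes f g :: "bool list \<Rightarrow> 'k::field mat"
  assumes cf: "\<And>w. f w \<in> carrier_mat 11 11" and cg: "\<And>w. g w \<in> carrier_mat 11 11"
    and zf: "\<And>w. length w \<ge> 2 \<Longrightarrow> f w = 0\<^sub>m 11 11" and zg: "\<And>w. length w \<ge> 2 \<Longrightarrow> g w = 0\<^sub>m 11 11"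
    and fg: "\<And>a b. f [a] * g [b] = 0\<^sub>m 11 11"
  shows "mat 11 11 (\<lambda>(i,j). \<Sum>l\<in>{0..length w}. (f (take l w) * g (drop l w)) $$ (i,j))
    = (if w = [] then f [] * g [] else if length w = 1 then f [] * g w + f w * g [] else 0\<^sub>m 11 11)"
proof -
  have df: "\<And>w. dim_row (f w) = 11" "\<And>w. dim_col (f w) = 11" "\<And>w. dim_row (g w) = 11" "\<And>w. dim_col (g w) = 11"
    using cf cg carrier_matD by blast+
  show ?thesis
proof (cases w)
  case Nil
  then show ?thesis using df by (intro eq_matI) auto
next
  case (Cons a rest)
  show ?thesis
  proof (cases rest)
    case Nil
    have s: "{0..Suc 0} = {0, Suc 0}" by auto
    show ?thesis using Cons Nil df by (intro eq_matI) (auto simp: s)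
  next
    case (Cons b rest')
    have z: "\<And>l. l \<in> {0..length w} \<Longrightarrow> f (take l w) * g (drop l w) = 0\<^sub>m 11 11"
    proof -
      fix l assume "l \<in> {0..length w}"
      show "f (take l w) * g (drop l w) = 0\<^sub>m 11 11"
      proof (cases "l \<ge> 2")
        case True
        then have "length (take l w) \<ge> 2" using \<open>w = a # rest\<close> Cons by auto
        then show ?thesis using zf cg by simp
      next
        case False
        then have "l = 0 \<or> l = 1" by auto
        then show ?thesis
        proof
          assume "l = 0"
          then show ?thesis using zg cf \<open>w = a # rest\<close> Cons by simp
        next
          assume l1: "l = 1"
          show ?thesis
          proof (cases rest')
            case Nil
            then show ?thesis using l1 fg \<open>w = a # rest\<close> Cons by simp
          next
            case (Cons c rest'')
            then show ?thesis using l1 zg cf \<open>w = a # rest\<close> \<open>rest = b # rest'\<close> by simp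
          qed
        qed
      qed
    qed
    show ?thesis using z \<open>w = a # rest\<close> Cons by (intro eq_matI) auto
  qed
qed
qed

lemma vset34: "vset {3,4} = {1,3,4}" by (auto simp: vset_def)

lemma vpath_iff: "vpath 5 {1,3,4} p \<longleftrightarrow> walk_ok 5 (fst p) (snd p) \<and> fst p \<in> {1,3,4} \<and> walk_end (fst p) (snd p) \<in> {1,3,4}"
  by (simp add: vpath_def path_src_def path_tgt_def)

lemma bw_walk: "walk_ok 5 v bw \<Longrightarrow> v = 3" by (simp add: bw_def)
lemma bw_end: "walk_end 3 bw = 1" by (simp add: bw_def)

lemma app_bw:
  assumes "ws2 @ ws1 = bw" "walk_end v2 ws2 \<in> {1,3,4}"
  shows "(ws2 = [] \<and> ws1 = bw) \<or> (ws2 = bw \<and> ws1 = [])"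
proof (cases ws2)
  case Nil then show ?thesis using assms by simp
next
  case (Cons x r)
  show ?thesis
  proof (cases r)
    case Nil
    then have "x = Arr_b 2" using assms Cons by (auto simp: bw_def)
    then show ?thesis using assms Cons Nil by simp
  next
    case (Cons y r')
    then show ?thesis using assms \<open>ws2 = x # r\<close> by (cases r') (auto simp: bw_def)
  qed
qed

lemma L2: "v1 \<in> {1,3,4} \<Longrightarrow> (Cw ws1 :: 'k::field mat) * Pv v1 * Xm b = (if v1 = 1 \<and> ws1 = [] then Xm b else 0\<^sub>m 11 11)"
proof (cases "ws1 = []")
  case True
  assume "v1 \<in> {1,3,4}"
  then show ?thesis using True Pv_Xm[of v1 b, where 'k='k] by simp
next
  case False
  assume v: "v1 \<in> {1,3,4}"
  have "(Cw ws1 :: 'k mat) * Pv v1 * Xm b = Cw ws1 * (Pv v1 * Xm b)" by (simp add: mult_assoc11)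
  also have "\<dots> = 0\<^sub>m 11 11" using Pv_Xm[OF v, of b, where 'k='k] Cw_Xm[OF False, of b, where 'k='k] by simp
  finally show ?thesis using False by simp
qed

lemma L3: "v2 \<in> {1,3,4} \<Longrightarrow> Xm b * ((Cw ws2 :: 'k::field mat) * Pv v2) = (if ws2 = [] \<and> v2 = 3 then Xm b else 0\<^sub>m 11 11)"
proof (cases "ws2 = []")
  case True
  assume "v2 \<in> {1,3,4}"
  then show ?thesis using True Xm_Pv[of v2 b, where 'k='k] by simp
next
  case False
  have "Xm b * ((Cw ws2 :: 'k mat) * Pv v2) = (Xm b * Cw ws2) * Pv v2" by (simp add: mult_assoc11)
  also have "\<dots> = 0\<^sub>m 11 11" using Xm_Cw[OF False, of b, where 'k='k] by simp
  finally show ?thesis using False by simp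
qed

lemma Cb_simps:
  "Cb p [] = Cw (snd p) * Pv (fst p)"
  "Cb p [a] = (if snd p = bw then Xm a else 0\<^sub>m 11 11)"
  "length w \<ge> 2 \<Longrightarrow> Cb p w = 0\<^sub>m 11 11"
  by (auto simp: Cb_def)

lemma add0_11[simp]: "(A::'k::field mat) \<in> carrier_mat 11 11 \<Longrightarrow> A + 0\<^sub>m 11 11 = A"
  "(A::'k::field mat) \<in> carrier_mat 11 11 \<Longrightarrow> 0\<^sub>m 11 11 + A = A"
  by auto

lemma Cb_mult:
  assumes p: "vpath 5 {1,3,4} p" and q: "vpath 5 {1,3,4} q"
  shows "mat 11 11 (\<lambda>(i,j). \<Sum>l\<in>{0..length w}. (Cb p (take l w) * Cb q (drop l w)) $$ (i,j))
       = (if path_tgt q = path_src p then Cb (path_mult p q) w else (0\<^sub>m 11 11 :: 'k::field mat))"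
proof -
  obtain v1 ws1 where p1: "p = (v1, ws1)" by (cases p)
  obtain v2 ws2 where q1: "q = (v2, ws2)" by (cases q)
  have w1: "walk_ok 5 v1 ws1" "v1 \<in> {1,3,4}" "walk_end v1 ws1 \<in> {1,3,4}" using vpath_iff[THEN iffD1, OF p] p1 by auto
  have w2: "walk_ok 5 v2 ws2" "v2 \<in> {1,3,4}" "walk_end v2 ws2 \<in> {1,3,4}" using vpath_iff[THEN iffD1, OF q] q1 by auto
  have tq: "path_tgt q = walk_end v2 ws2" "path_src p = v1" "path_mult p q = (v2, ws2 @ ws1)"
    using p1 q1 by (auto simp: path_tgt_def path_src_def path_mult_def)
  have fg: "\<And>a b. (Cb p [a] :: 'k mat) * Cb q [b] = 0\<^sub>m 11 11"
  proof -
    fix a b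
    show "(Cb p [a] :: 'k mat) * Cb q [b] = 0\<^sub>m 11 11"
      using Xm_Xm[of a b, where 'k='k] by (auto simp: Cb_simps)
  qed
  have conv': "mat 11 11 (\<lambda>(i,j). \<Sum>l\<in>{0..length w}. ((Cb p (take l w) :: 'k mat) * Cb q (drop l w)) $$ (i,j))
    = (if w = [] then Cb p [] * Cb q [] else if length w = 1 then Cb p [] * Cb q w + Cb p w * Cb q [] else 0\<^sub>m 11 11)"
    by (rule conv[where f="Cb p" and g="Cb q", OF _ _ _ _ fg]) (auto simp: Cb_simps)
  show ?thesis
  proof (cases w)
    case Nil
    have "(Cb p [] :: 'k mat) * Cb q [] = Cw ws1 * (Pv v1 * (Cw ws2 * Pv v2))"
      using p1 q1 by (simp add: Cb_simps mult_assoc11)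
    also have "\<dots> = (if v1 = walk_end v2 ws2 then Cw ws1 * (Cw ws2 * Pv v2) else 0\<^sub>m 11 11)"
      using Pv_Cw[OF w2 w1(2), where 'k='k] by simp
    also have "\<dots> = (if walk_end v2 ws2 = v1 then Cw (ws2 @ ws1) * Pv v2 else 0\<^sub>m 11 11)"
      using Cw_split[OF w2, of ws1, where 'k='k] by (auto simp: mult_assoc11)
    finally show ?thesis using conv' Nil tq by (simp add: Cb_simps)
  next
    case (Cons a rest)
    show ?thesis
    proof (cases rest)
      case Nil
      have lhs: "(Cb p [] :: 'k mat) * Cb q [a] + Cb p [a] * Cb q []
        = (if ws2 = bw then (if v1 = 1 \<and> ws1 = [] then Xm a else 0\<^sub>m 11 11) else 0\<^sub>m 11 11)
          + (if ws1 = bw then (if ws2 = [] \<and> v2 = 3 then Xm a else 0\<^sub>m 11 11) else 0\<^sub>m 11 11)"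
        using p1 q1 L2[OF w1(2), of ws1 a, where 'k='k] L3[OF w2(2), of a ws2, where 'k='k]
        by (auto simp: Cb_simps)
      have rhs: "(if path_tgt q = path_src p then Cb (path_mult p q) [a] else (0\<^sub>m 11 11 :: 'k mat))
        = (if walk_end v2 ws2 = v1 \<and> ws2 @ ws1 = bw then Xm a else 0\<^sub>m 11 11)"
        using tq by (auto simp: Cb_simps)
      have b2: "ws2 = bw \<Longrightarrow> v2 = 3" using w2 bw_walk by blast
      have b1: "ws1 = bw \<Longrightarrow> v1 = 3" using w1 bw_walk by blast
      have eq: "(if ws2 = bw then (if v1 = 1 \<and> ws1 = [] then Xm a else 0\<^sub>m 11 11) else 0\<^sub>m 11 11)
          + (if ws1 = bw then (if ws2 = [] \<and> v2 = 3 then Xm a else 0\<^sub>m 11 11) else 0\<^sub>m 11 11)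
        = (if walk_end v2 ws2 = v1 \<and> ws2 @ ws1 = bw then Xm a else (0\<^sub>m 11 11 :: 'k mat))"
      proof (cases "ws2 @ ws1 = bw")
        case True
        from app_bw[OF True w2(3)] show ?thesis
        proof
          assume h: "ws2 = [] \<and> ws1 = bw"
          then show ?thesis using b1 by (auto simp: bw_def)
        next
          assume h: "ws2 = bw \<and> ws1 = []"
          then show ?thesis using b2 bw_end by (auto simp: bw_def)
        qed
      next
        case False
        then show ?thesis by auto
      qed
      have wa: "w = [a]" using Cons Nil by simp
      have "mat 11 11 (\<lambda>(i,j). \<Sum>l\<in>{0..length w}. ((Cb p (take l w) :: 'k mat) * Cb q (drop l w)) $$ (i,j))
        = Cb p [] * Cb q [a] + Cb p [a] * Cb q []" using conv' wa by simp
      also have "\<dots> = (if walk_end v2 ws2 = v1 \<and> ws2 @ ws1 = bw then Xm a else 0\<^sub>m 11 11)"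
        using lhs eq by simp
      also have "\<dots> = (if path_tgt q = path_src p then Cb (path_mult p q) [a] else (0\<^sub>m 11 11 :: 'k mat))"
        using rhs by simp
      finally show ?thesis using wa by simp
    next
      case (Cons b rest')
      then show ?thesis using conv' \<open>w = a # rest\<close> by (auto simp: Cb_simps)
    qed
  qed
qed

lemma less11: "(i::nat) < 11 \<Longrightarrow> i = 0 \<or> i = 1 \<or> i = 2 \<or> i = 3 \<or> i = 4 \<or> i = 5 \<or> i = 6 \<or> i = 7 \<or> i = 8 \<or> i = 9 \<or> i = 10"
  by arith

lemma Cb_unit: "mat 11 11 (\<lambda>(i,j). \<Sum>v\<in>{1,3,4}. Cb (v,[]) w $$ (i,j)) = (if w = [] then 1\<^sub>m 11 else (0\<^sub>m 11 11 :: 'k::field mat))"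
proof (cases "w = []")
  case True
  have "mat 11 11 (\<lambda>(i,j). \<Sum>v\<in>{1,3,4}. (Cb (v,[]) w :: 'k mat) $$ (i,j)) = 1\<^sub>m 11"
  proof (rule eq_matI)
    fix i j assume i: "i < dim_row (1\<^sub>m 11 :: 'k mat)" and j: "j < dim_col (1\<^sub>m 11 :: 'k mat)"
    hence i': "i < 11" and j': "j < 11" by auto
    have "(\<Sum>v\<in>{1,3,4}. (Cb (v,[]) w :: 'k mat) $$ (i,j)) = (Pv 1 :: 'k mat) $$ (i,j) + (Pv 3 $$ (i,j) + Pv 4 $$ (i,j))"
      using True by (simp add: Cb_simps)
    also have "\<dots> = (if i = j then 1 else 0)"
      using less11[OF i'] less11[OF j'] i' j' by (auto simp: LPv_def Ldefs)
    finally show "mat 11 11 (\<lambda>(i,j). \<Sum>v\<in>{1,3,4}. (Cb (v,[]) w :: 'k mat) $$ (i,j)) $$ (i,j) = (1\<^sub>m 11 :: 'k mat) $$ (i,j)"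
      using i' j' by simp
  qed auto
  then show ?thesis using True by simp
next
  case False
  have "\<And>v. (Cb (v,[]) w :: 'k mat) = 0\<^sub>m 11 11" using False by (auto simp: Cb_def bw_def)
  then show ?thesis using False by (intro eq_matI) auto
qed

lemma arr_a_not_bw: "Arr_a k \<in> set ws \<Longrightarrow> ws \<noteq> bw" by (auto simp: bw_def)

lemma cw_rel2:
  assumes "walk_ok 5 v (pre @ [Arr_b 2, Arr_a 2] @ post)" "v \<in> {1,3,4}"
  shows "(Cw (pre @ [Arr_b 2, Arr_a 2] @ post) :: 'k::field mat) = Cw (pre @ [Arr_a 3, Arr_b 3] @ post)"
proof -
  have w: "walk_ok 5 v pre" "walk_ok 5 (walk_end v pre) ([Arr_b 2, Arr_a 2] @ post)"
    using assms(1) walk_ok_append by blast+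
  have e: "walk_end v pre = 3" using w(2) by simp
  have K: "(pm Ld :: 'k mat) = pm LD * pm LG" using test1[where 'k='k] by simp
  have "(Cw (pre @ [Arr_b 2, Arr_a 2] @ post) :: 'k mat) = Cw ([Arr_b 2, Arr_a 2] @ post) * Cw pre"
    using Cw_split[OF w(1) assms(2), where 'k='k] e by simp
  also have "\<dots> = Cw post * pm Ld * Cw pre" by (simp add: seg2_def)
  also have "\<dots> = Cw post * pm LD * pm LG * Cw pre" by (simp add: K mult_assoc11)
  also have "\<dots> = Cw ([Arr_a 3, Arr_b 3] @ post) * Cw pre"
    by (simp add: Cw_cons1 seg1_def)
  also have "\<dots> = Cw (pre @ [Arr_a 3, Arr_b 3] @ post)"
    using Cw_split[OF w(1) assms(2), where 'k='k] e by simp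
  finally show ?thesis .
qed

lemma cw_rel3:
  assumes "walk_ok 5 v (pre @ [Arr_b 3, Arr_a 3] @ post)" "v \<in> {1,3,4}"
  shows "(Cw (pre @ [Arr_b 3, Arr_a 3] @ post) :: 'k::field mat) = Cw (pre @ [Arr_a 4, Arr_b 4] @ post)"
proof -
  have w: "walk_ok 5 v pre" "walk_ok 5 (walk_end v pre) ([Arr_b 3, Arr_a 3] @ post)"
    using assms(1) walk_ok_append by blast+
  have e: "walk_end v pre = 4" using w(2) by simp
  have K: "(pm Lc :: 'k mat) = pm LG * pm LD" by (auto simp: pmsimps intro!: pm_eqI)
  have "(Cw (pre @ [Arr_b 3, Arr_a 3] @ post) :: 'k mat) = Cw ([Arr_b 3, Arr_a 3] @ post) * Cw pre"
    using Cw_split[OF w(1) assms(2), where 'k='k] e by simp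
  also have "\<dots> = Cw post * pm LG * pm LD * Cw pre" by (simp add: Cw_cons1 seg1_def)
  also have "\<dots> = Cw post * pm Lc * Cw pre" by (simp add: K mult_assoc11)
  also have "\<dots> = Cw ([Arr_a 4, Arr_b 4] @ post) * Cw pre"
    by (simp add: seg2_def)
  also have "\<dots> = Cw (pre @ [Arr_a 4, Arr_b 4] @ post)"
    using Cw_split[OF w(1) assms(2), where 'k='k] e by simp
  finally show ?thesis .
qed

lemma cw_rel1:
  assumes wk: "walk_ok 5 v (pre @ [Arr_b 1, Arr_a 1] @ post)" and v: "v \<in> {1,3,4}"
    and en: "walk_end v (pre @ [Arr_b 1, Arr_a 1] @ post) \<in> {1,3,4}"
  shows "(Cw (pre @ [Arr_b 1, Arr_a 1] @ post) :: 'k::field mat) = Cw (pre @ [Arr_a 2, Arr_b 2] @ post)"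
proof -
  have w: "walk_ok 5 v pre" "walk_ok 5 (walk_end v pre) ([Arr_b 1, Arr_a 1] @ post)"
    using wk walk_ok_append by blast+
  have e: "walk_end v pre = 2" using w(2) by simp
  have pne: "pre \<noteq> []" using e v by auto
  obtain pre' x where px: "pre = pre' @ [x]" using pne by (cases pre rule: rev_exhaust) auto
  have w': "walk_ok 5 v pre'" "walk_ok 5 (walk_end v pre') [x]" using w(1) px walk_ok_append by blast+
  have xt: "arr_tgt x = 2" using e px by (simp add: walk_end_append)
  have xok: "arrow_ok 5 x" "arr_src x = walk_end v pre'" using w'(2) by auto
  have xs: "x = Arr_a 1 \<or> x = Arr_b 2" using arrows5[OF xok(1)] xt by (auto simp: eval_nat_numeral)
  have u: "walk_end v pre' \<in> {1,3,4}" using xs xok(2) by auto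
  have wp: "walk_ok 5 2 post" "walk_end 2 post \<in> {1,3,4}"
    using w(2) e en by (auto simp: walk_end_append walk_ok_append eval_nat_numeral)
  have posne: "post \<noteq> []" using wp by auto
  obtain y post' where yp: "post = y # post'" using posne by (cases post) auto
  have yok: "arrow_ok 5 y" "arr_src y = 2" using wp(1) yp by (auto simp: eval_nat_numeral)
  have ys: "y = Arr_a 2 \<or> y = Arr_b 1" using arrows5[OF yok(1)] yok(2) by (auto simp: eval_nat_numeral)
  have K: "(pm (seg2 (Arr_a 1) y) :: 'k mat) * pm (seg2 x (Arr_b 1)) = pm (seg2 (Arr_b 2) y) * pm (seg2 x (Arr_a 2))"
    using xs ys by (auto simp: pmsimps pm_Nil intro!: pm_eqI)
  have xn: "\<not> (x = Arr_a 3 \<or> x = Arr_b 3)" using xs by auto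
  have l1: "pre @ [Arr_b 1, Arr_a 1] @ post = pre' @ (x # Arr_b 1 # Arr_a 1 # y # post')" using px yp by simp
  have l2: "pre @ [Arr_a 2, Arr_b 2] @ post = pre' @ (x # Arr_a 2 # Arr_b 2 # y # post')" using px yp by simp
  have "(Cw (pre @ [Arr_b 1, Arr_a 1] @ post) :: 'k mat) = Cw (x # Arr_b 1 # Arr_a 1 # y # post') * Cw pre'"
    unfolding l1 using Cw_split[OF w'(1) v u, where 'k='k] by simp
  also have "\<dots> = Cw post' * (pm (seg2 (Arr_a 1) y) * pm (seg2 x (Arr_b 1))) * Cw pre'"
    using xn by (simp add: mult_assoc11)
  also have "\<dots> = Cw post' * (pm (seg2 (Arr_b 2) y) * pm (seg2 x (Arr_a 2))) * Cw pre'"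
    using K by simp
  also have "\<dots> = Cw (x # Arr_a 2 # Arr_b 2 # y # post') * Cw pre'"
    using xn by (simp add: mult_assoc11)
  also have "\<dots> = Cw (pre @ [Arr_a 2, Arr_b 2] @ post)"
    unfolding l2 using Cw_split[OF w'(1) v u, where 'k='k] by simp
  finally show ?thesis .
qed

lemma cw_relz:
  assumes wk: "walk_ok 5 v (pre @ [Arr_b 4, Arr_a 4] @ post)" and v: "v \<in> {1,3,4}"
    and en: "walk_end v (pre @ [Arr_b 4, Arr_a 4] @ post) \<in> {1,3,4}"
  shows "(Cw (pre @ [Arr_b 4, Arr_a 4] @ post) :: 'k::field mat) = 0\<^sub>m 11 11"
proof -
  have w: "walk_ok 5 v pre" "walk_ok 5 (walk_end v pre) ([Arr_b 4, Arr_a 4] @ post)"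
    using wk walk_ok_append by blast+
  have e: "walk_end v pre = 5" using w(2) by simp
  have pne: "pre \<noteq> []" using e v by auto
  obtain pre' x where px: "pre = pre' @ [x]" using pne by (cases pre rule: rev_exhaust) auto
  have w': "walk_ok 5 v pre'" "walk_ok 5 (walk_end v pre') [x]" using w(1) px walk_ok_append by blast+
  have xt: "arr_tgt x = 5" using e px by (simp add: walk_end_append)
  have xok: "arrow_ok 5 x" "arr_src x = walk_end v pre'" using w'(2) by auto
  have xs: "x = Arr_a 4" using arrows5[OF xok(1)] xt by (auto simp: eval_nat_numeral)
  have u: "walk_end v pre' \<in> {1,3,4}" using xs xok(2) by auto
  have wp: "walk_ok 5 5 post" "walk_end 5 post \<in> {1,3,4}"
    using w(2) e en by (auto simp: walk_end_append walk_ok_append eval_nat_numeral)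
  have posne: "post \<noteq> []" using wp by auto
  obtain y post' where yp: "post = y # post'" using posne by (cases post) auto
  have yok: "arrow_ok 5 y" "arr_src y = 5" using wp(1) yp by (auto simp: eval_nat_numeral)
  have ys: "y = Arr_b 4" using arrows5[OF yok(1)] yok(2) by (auto simp: eval_nat_numeral)
  have K: "(pm Lc :: 'k mat) * pm Lc = 0\<^sub>m 11 11" by (auto simp: pmsimps pm_Nil)
  have l1: "pre @ [Arr_b 4, Arr_a 4] @ post = pre' @ (Arr_a 4 # Arr_b 4 # Arr_a 4 # Arr_b 4 # post')" using px yp xs ys by simp
  have "(Cw (pre @ [Arr_b 4, Arr_a 4] @ post) :: 'k mat) = Cw (Arr_a 4 # Arr_b 4 # Arr_a 4 # Arr_b 4 # post') * Cw pre'"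
    unfolding l1 using Cw_split[OF w'(1) v u, where 'k='k] by simp
  also have "\<dots> = Cw post' * (pm Lc * pm Lc) * Cw pre'"
    by (simp add: mult_assoc11 seg2_def)
  also have "\<dots> = 0\<^sub>m 11 11" using K by simp
  finally show ?thesis .
qed

lemma crl: "comm_rel_l 1 = [Arr_b 1, Arr_a 1]" "comm_rel_l 2 = [Arr_b 2, Arr_a 2]" "comm_rel_l 3 = [Arr_b 3, Arr_a 3]"
  by (simp_all add: comm_rel_l_def)

lemma crr: "comm_rel_r 1 = [Arr_a 2, Arr_b 2]" "comm_rel_r 2 = [Arr_a 3, Arr_b 3]" "comm_rel_r 3 = [Arr_a 4, Arr_b 4]"
  by (simp_all add: comm_rel_r_def eval_nat_numeral)

lemma zr5: "zero_rel 5 = [Arr_b 4, Arr_a 4]" by (simp add: zero_rel_def)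

theorem Cb_bimod: "is_bimod 5 {3,4} 11 (Cb :: path \<Rightarrow> bool list \<Rightarrow> 'k::field mat)"
  unfolding is_bimod_def vset34
proof (intro conjI allI impI)
  fix p w show "(Cb p w :: 'k mat) \<in> carrier_mat 11 11" by simp
next
  fix p :: path
  show "finite {w. (Cb p w :: 'k mat) \<noteq> 0\<^sub>m 11 11}"
  proof (rule finite_subset[of _ "{[], [True], [False]}"])
    show "{w. (Cb p w :: 'k mat) \<noteq> 0\<^sub>m 11 11} \<subseteq> {[], [True], [False]}"
    proof
      fix w assume "w \<in> {w. (Cb p w :: 'k mat) \<noteq> 0\<^sub>m 11 11}"
      hence "w = [] \<or> length w = 1" by (auto simp: Cb_def split: if_splits)
      then show "w \<in> {[], [True], [False]}"
      proof
        assume "w = []" thus ?thesis by simp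
      next
        assume "length w = 1"
        then obtain b where "w = [b]" by (cases w) auto
        then show ?thesis by (cases b) auto
      qed
    qed
  qed auto
next
  fix p q w assume "vpath 5 {1,3,4} p" "vpath 5 {1,3,4} q"
  then show "mat 11 11 (\<lambda>(i,j). \<Sum>l\<in>{0..length w}. ((Cb p (take l w) :: 'k mat) * Cb q (drop l w)) $$ (i,j))
       = (if path_tgt q = path_src p then Cb (path_mult p q) w else 0\<^sub>m 11 11)"
    by (rule Cb_mult)
next
  fix w show "mat 11 11 (\<lambda>(i,j). \<Sum>v\<in>{1,3,4}. (Cb (v,[]) w :: 'k mat) $$ (i,j)) = (if w = [] then 1\<^sub>m 11 else 0\<^sub>m 11 11)"
    by (rule Cb_unit)
next
  fix v pre post i w
  assume i: "1 \<le> i \<and> i \<le> 5 - 2" and vp: "vpath 5 {1,3,4} (v, pre @ comm_rel_l i @ post)"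
  have vv: "walk_ok 5 v (pre @ comm_rel_l i @ post)" "v \<in> {1,3,4}" "walk_end v (pre @ comm_rel_l i @ post) \<in> {1,3,4}"
    using vpath_iff[THEN iffD1, OF vp] by auto
  have i3: "i = 1 \<or> i = 2 \<or> i = 3" using i by auto
  have cw: "(Cw (pre @ comm_rel_l i @ post) :: 'k mat) = Cw (pre @ comm_rel_r i @ post)"
  proof -
    from i3 consider "i = 1" | "i = 2" | "i = 3" by blast
    then show ?thesis
    proof cases
      case 1
      have a: "walk_ok 5 v (pre @ [Arr_b 1, Arr_a 1] @ post)" using vv(1) unfolding 1 crl .
      have b: "walk_end v (pre @ [Arr_b 1, Arr_a 1] @ post) \<in> {1,3,4}" using vv(3) unfolding 1 crl .
      show ?thesis unfolding 1 crl crr by (rule cw_rel1[OF a vv(2) b])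
    next
      case 2
      have a: "walk_ok 5 v (pre @ [Arr_b 2, Arr_a 2] @ post)" using vv(1) unfolding 2 crl .
      show ?thesis unfolding 2 crl crr by (rule cw_rel2[OF a vv(2)])
    next
      case 3
      have a: "walk_ok 5 v (pre @ [Arr_b 3, Arr_a 3] @ post)" using vv(1) unfolding 3 crl .
      show ?thesis unfolding 3 crl crr by (rule cw_rel3[OF a vv(2)])
    qed
  qed
  have nb: "pre @ comm_rel_l i @ post \<noteq> bw" "pre @ comm_rel_r i @ post \<noteq> bw"
    by (auto simp: comm_rel_l_def comm_rel_r_def intro!: arr_a_not_bw)
  show "(Cb (v, pre @ comm_rel_l i @ post) w :: 'k mat) = Cb (v, pre @ comm_rel_r i @ post) w"
    using cw nb by (simp add: Cb_def)
next
  fix v pre post w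
  assume vp: "vpath 5 {1,3,4} (v, pre @ zero_rel 5 @ post)"
  have vv: "walk_ok 5 v (pre @ zero_rel 5 @ post)" "v \<in> {1,3,4}" "walk_end v (pre @ zero_rel 5 @ post) \<in> {1,3,4}"
    using vpath_iff[THEN iffD1, OF vp] by auto
  have cw: "(Cw (pre @ zero_rel 5 @ post) :: 'k mat) = 0\<^sub>m 11 11"
    unfolding zr5 by (rule cw_relz[OF vv(1)[unfolded zr5] vv(2) vv(3)[unfolded zr5]])
  have nb: "pre @ zero_rel 5 @ post \<noteq> bw"
    by (auto simp: zero_rel_def intro!: arr_a_not_bw)
  show "(Cb (v, pre @ zero_rel 5 @ post) w :: 'k mat) = 0\<^sub>m 11 11"
    using cw nb by (simp add: Cb_def)
qed

definition kr :: "nat \<Rightarrow> (nat \<times> nat) list \<Rightarrow> 'k::field mat \<Rightarrow> 'k mat" where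
  "kr m L W = mat (11*m) (11*m) (\<lambda>(i,j). (if (i div m, j div m) \<in> set L then 1 else 0) * W $$ (i mod m, j mod m))"

definition blk :: "nat \<Rightarrow> 'k::field mat \<Rightarrow> nat \<Rightarrow> nat \<Rightarrow> 'k mat" where
  "blk m E k l = mat m m (\<lambda>(s,t). E $$ (k*m+s, l*m+t))"

lemma kr_carrier[simp]: "kr m L W \<in> carrier_mat (11*m) (11*m)" by (simp add: kr_def)
lemma blk_carrier[simp]: "blk m E k l \<in> carrier_mat m m" by (simp add: blk_def)
lemma kr_dims[simp]: "dim_row (kr m L W) = 11*m" "dim_col (kr m L W) = 11*m" by (simp_all add: kr_def)
lemma blk_dims[simp]: "dim_row (blk m E k l) = m" "dim_col (blk m E k l) = m" by (simp_all add: blk_def)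

lemma div_bound: "(i::nat) < 11 * m \<Longrightarrow> i div m < 11"
  by (simp add: less_mult_imp_div_less mult.commute)

lemma sum_reindex: fixes g :: "nat \<Rightarrow> 'a::comm_monoid_add" shows "sum g {0..<n*m} = (\<Sum>k<n. \<Sum>u<m. g (k*m+u))"
proof -
  have "sum g {0..<n*m} = (\<Sum>k<n. sum g {k*m..<k*m+m})"
    using sum.nat_group[of g m n] by (simp add: atLeast0LessThan)
  also have "\<dots> = (\<Sum>k<n. \<Sum>u<m. g (k*m+u))"
  proof (rule sum.cong[OF refl])
    fix k
    have "sum g {k*m..<k*m+m} = sum g {0 + k*m..<m + k*m}" by (simp add: add.commute)
    also have "\<dots> = (\<Sum>u\<in>{0..<m}. g (u + k*m))" by (rule sum.shift_bounds_nat_ivl)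
    finally show "sum g {k*m..<k*m+m} = (\<Sum>u<m. g (k*m+u))" by (simp add: atLeast0LessThan add.commute)
  qed
  finally show ?thesis .
qed

lemma idx_bound: "k < (n::nat) \<Longrightarrow> s < m \<Longrightarrow> k*m+s < n*m"
proof -
  assume k: "k < n" and s: "s < m"
  have "k*m+s < Suc k * m" using s by simp
  also have "\<dots> \<le> n * m" using k by (intro mult_le_mono1) simp
  finally show ?thesis .
qed

lemma divmod_blk: "u < (m::nat) \<Longrightarrow> (k*m+u) div m = k" "u < (m::nat) \<Longrightarrow> (k*m+u) mod m = u"
  by auto

lemma blk_mult_kr:
  assumes E: "(E::'k::field mat) \<in> carrier_mat (11*m) (11*m)" and W: "W \<in> carrier_mat m m"
    and k: "k < 11" and l: "l < 11" and bL: "bnd L" and dL: "distinct (map snd L)"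
  shows "blk m (E * kr m L W) k l = (case map_of (map prod.swap L) l of None \<Rightarrow> 0\<^sub>m m m | Some k' \<Rightarrow> blk m E k k' * W)"
proof (rule eq_matI)
  fix s t assume st: "s < dim_row (case map_of (map prod.swap L) l of None \<Rightarrow> 0\<^sub>m m m | Some k' \<Rightarrow> blk m E k k' * W)"
    "t < dim_col (case map_of (map prod.swap L) l of None \<Rightarrow> 0\<^sub>m m m | Some k' \<Rightarrow> blk m E k k' * W)"
  hence s: "s < m" and t: "t < m" using W by (auto split: option.splits)
  have km: "k*m+s < 11*m" using idx_bound[OF k s] .
  have lm: "l*m+t < 11*m" using idx_bound[OF l t] .
  have "(E * kr m L W) $$ (k*m+s, l*m+t) = (\<Sum>j\<in>{0..<11*m}. E $$ (k*m+s, j) * kr m L W $$ (j, l*m+t))"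
    using E km lm by (simp add: scalar_prod_def carrier_matD)
  also have "\<dots> = (\<Sum>k'<11. \<Sum>u<m. E $$ (k*m+s, k'*m+u) * kr m L W $$ (k'*m+u, l*m+t))"
    by (rule sum_reindex)
  also have "\<dots> = (\<Sum>k'<11. (if (k',l) \<in> set L then 1 else 0) * (blk m E k k' * W) $$ (s,t))"
  proof (rule sum.cong[OF refl])
    fix k' assume k': "k' \<in> {..<11::nat}"
    have "(\<Sum>u<m. E $$ (k*m+s, k'*m+u) * kr m L W $$ (k'*m+u, l*m+t))
        = (\<Sum>u<m. (if (k',l) \<in> set L then 1 else 0) * (E $$ (k*m+s, k'*m+u) * W $$ (u,t)))"
    proof (rule sum.cong[OF refl])
      fix u assume u: "u \<in> {..<m}"
      have um: "k'*m+u < 11*m" using idx_bound[of k' 11 u m] k' u by simp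
      show "E $$ (k*m+s, k'*m+u) * kr m L W $$ (k'*m+u, l*m+t) = (if (k',l) \<in> set L then 1 else 0) * (E $$ (k*m+s, k'*m+u) * W $$ (u,t))"
        using um lm u t by (simp add: kr_def divmod_blk)
    qed
    also have "\<dots> = (if (k',l) \<in> set L then 1 else 0) * (\<Sum>u<m. E $$ (k*m+s, k'*m+u) * W $$ (u,t))"
      by (simp add: sum_distrib_left)
    also have "\<dots> = (if (k',l) \<in> set L then 1 else 0) * (blk m E k k' * W) $$ (s,t)"
      using W s t by (simp add: blk_def scalar_prod_def atLeast0LessThan)
    finally show "(\<Sum>u<m. E $$ (k*m+s, k'*m+u) * kr m L W $$ (k'*m+u, l*m+t)) = (if (k',l) \<in> set L then 1 else 0) * (blk m E k k' * W) $$ (s,t)" .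
  qed
  also have "\<dots> = (\<Sum>k'<11. if map_of (map prod.swap L) l = Some k' then (blk m E k k' * W) $$ (s,t) else 0)"
  proof (rule sum.cong[OF refl])
    fix k'
    have "(k',l) \<in> set L \<longleftrightarrow> (l,k') \<in> set (map prod.swap L)" by force
    also have "\<dots> \<longleftrightarrow> map_of (map prod.swap L) l = Some k'"
      using dL by (subst map_of_eq_Some_iff) (auto simp: comp_def)
    finally show "(if (k',l) \<in> set L then 1 else 0) * (blk m E k k' * W) $$ (s,t) = (if map_of (map prod.swap L) l = Some k' then (blk m E k k' * W) $$ (s,t) else 0)"
      by simp
  qed
  also have "\<dots> = (case map_of (map prod.swap L) l of None \<Rightarrow> 0\<^sub>m m m | Some k' \<Rightarrow> blk m E k k' * W) $$ (s,t)"
  proof (cases "map_of (map prod.swap L) l")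
    case None then show ?thesis using s t by simp
  next
    case (Some k0)
    have "(l,k0) \<in> set (map prod.swap L)" using Some map_of_SomeD by fastforce
    hence "k0 < 11" using bL by (auto simp: bnd_def)
    then show ?thesis using Some s t by simp
  qed
  finally show "blk m (E * kr m L W) k l $$ (s,t) = (case map_of (map prod.swap L) l of None \<Rightarrow> 0\<^sub>m m m | Some k' \<Rightarrow> blk m E k k' * W) $$ (s,t)"
    using s t by (simp add: blk_def)
qed (use W in \<open>auto simp: blk_def split: option.splits\<close>)

lemma blk_kr_mult:
  assumes E: "(E::'k::field mat) \<in> carrier_mat (11*m) (11*m)" and W: "W \<in> carrier_mat m m"
    and k: "k < 11" and l: "l < 11" and bL: "bnd L" and dL: "distinct (map fst L)"
  shows "blk m (kr m L W * E) k l = (case map_of L k of None \<Rightarrow> 0\<^sub>m m m | Some k' \<Rightarrow> W * blk m E k' l)"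
proof (rule eq_matI)
  fix s t assume st: "s < dim_row (case map_of L k of None \<Rightarrow> 0\<^sub>m m m | Some k' \<Rightarrow> W * blk m E k' l)"
    "t < dim_col (case map_of L k of None \<Rightarrow> 0\<^sub>m m m | Some k' \<Rightarrow> W * blk m E k' l)"
  hence s: "s < m" and t: "t < m" using W by (auto split: option.splits)
  have km: "k*m+s < 11*m" using idx_bound[OF k s] .
  have lm: "l*m+t < 11*m" using idx_bound[OF l t] .
  have "(kr m L W * E) $$ (k*m+s, l*m+t) = (\<Sum>j\<in>{0..<11*m}. kr m L W $$ (k*m+s, j) * E $$ (j, l*m+t))"
    using E km lm by (simp add: scalar_prod_def carrier_matD)
  also have "\<dots> = (\<Sum>k'<11. \<Sum>u<m. kr m L W $$ (k*m+s, k'*m+u) * E $$ (k'*m+u, l*m+t))"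
    by (rule sum_reindex)
  also have "\<dots> = (\<Sum>k'<11. (if (k,k') \<in> set L then 1 else 0) * (W * blk m E k' l) $$ (s,t))"
  proof (rule sum.cong[OF refl])
    fix k' assume k': "k' \<in> {..<11::nat}"
    have "(\<Sum>u<m. kr m L W $$ (k*m+s, k'*m+u) * E $$ (k'*m+u, l*m+t))
        = (\<Sum>u<m. (if (k,k') \<in> set L then 1 else 0) * (W $$ (s,u) * E $$ (k'*m+u, l*m+t)))"
    proof (rule sum.cong[OF refl])
      fix u assume u: "u \<in> {..<m}"
      have um: "k'*m+u < 11*m" using idx_bound[of k' 11 u m] k' u by simp
      show "kr m L W $$ (k*m+s, k'*m+u) * E $$ (k'*m+u, l*m+t) = (if (k,k') \<in> set L then 1 else 0) * (W $$ (s,u) * E $$ (k'*m+u, l*m+t))"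
        using um km u s by (simp add: kr_def divmod_blk)
    qed
    also have "\<dots> = (if (k,k') \<in> set L then 1 else 0) * (\<Sum>u<m. W $$ (s,u) * E $$ (k'*m+u, l*m+t))"
      by (simp add: sum_distrib_left)
    also have "\<dots> = (if (k,k') \<in> set L then 1 else 0) * (W * blk m E k' l) $$ (s,t)"
      using W s t by (simp add: blk_def scalar_prod_def atLeast0LessThan)
    finally show "(\<Sum>u<m. kr m L W $$ (k*m+s, k'*m+u) * E $$ (k'*m+u, l*m+t)) = (if (k,k') \<in> set L then 1 else 0) * (W * blk m E k' l) $$ (s,t)" .
  qed
  also have "\<dots> = (\<Sum>k'<11. if map_of L k = Some k' then (W * blk m E k' l) $$ (s,t) else 0)"
    by (rule sum.cong[OF refl]) (simp add: dL)
  also have "\<dots> = (case map_of L k of None \<Rightarrow> 0\<^sub>m m m | Some k' \<Rightarrow> W * blk m E k' l) $$ (s,t)"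
  proof (cases "map_of L k")
    case None then show ?thesis using s t by simp
  next
    case (Some k0)
    have "(k,k0) \<in> set L" using Some map_of_SomeD by fastforce
    hence "k0 < 11" using bL by (auto simp: bnd_def)
    then show ?thesis using Some s t W by simp
  qed
  finally show "blk m (kr m L W * E) k l $$ (s,t) = (case map_of L k of None \<Rightarrow> 0\<^sub>m m m | Some k' \<Rightarrow> W * blk m E k' l) $$ (s,t)"
    using s t by (simp add: blk_def)
qed (use W in \<open>auto simp: blk_def split: option.splits\<close>)

lemma blk_add:
  assumes "(A::'k::field mat) \<in> carrier_mat (11*m) (11*m)" "B \<in> carrier_mat (11*m) (11*m)" "k < 11" "l < 11"
  shows "blk m (A + B) k l = blk m A k l + blk m B k l"
proof (rule eq_matI)
  fix s t assume "s < dim_row (blk m A k l + blk m B k l)" "t < dim_col (blk m A k l + blk m B k l)"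
  hence s: "s < m" and t: "t < m" by auto
  show "blk m (A + B) k l $$ (s,t) = (blk m A k l + blk m B k l) $$ (s,t)"
    using assms idx_bound[OF assms(3) s] idx_bound[OF assms(4) t] s t by (simp add: blk_def carrier_matD)
qed auto

lemma blk_mult_gen:
  assumes E: "(E::'k::field mat) \<in> carrier_mat (11*m) (11*m)" and E': "E' \<in> carrier_mat (11*m) (11*m)"
    and k: "k < 11" and l: "l < 11" and s: "s < m" and t: "t < m"
  shows "blk m (E * E') k l $$ (s,t) = (\<Sum>k'<11. (blk m E k k' * blk m E' k' l) $$ (s,t))"
proof -
  have km: "k*m+s < 11*m" using idx_bound[OF k s] .
  have lm: "l*m+t < 11*m" using idx_bound[OF l t] .
  have "blk m (E * E') k l $$ (s,t) = (\<Sum>j\<in>{0..<11*m}. E $$ (k*m+s, j) * E' $$ (j, l*m+t))"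
    using E E' km lm s t by (simp add: blk_def scalar_prod_def carrier_matD)
  also have "\<dots> = (\<Sum>k'<11. \<Sum>u<m. E $$ (k*m+s, k'*m+u) * E' $$ (k'*m+u, l*m+t))"
    by (rule sum_reindex)
  also have "\<dots> = (\<Sum>k'<11. (blk m E k k' * blk m E' k' l) $$ (s,t))"
    using s t by (simp add: blk_def scalar_prod_def atLeast0LessThan)
  finally show ?thesis .
qed

lemma blk_mult_single:
  assumes E: "(E::'k::field mat) \<in> carrier_mat (11*m) (11*m)" and E': "E' \<in> carrier_mat (11*m) (11*m)"
    and k: "k < 11" and l: "l < 11" and a: "a < 11"
    and z: "\<And>k'. k' < 11 \<Longrightarrow> k' \<noteq> a \<Longrightarrow> blk m E k k' = 0\<^sub>m m m"
  shows "blk m (E * E') k l = blk m E k a * blk m E' a l"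
proof (rule eq_matI)
  fix s t assume "s < dim_row (blk m E k a * blk m E' a l)" "t < dim_col (blk m E k a * blk m E' a l)"
  hence s: "s < m" and t: "t < m" by auto
  have "blk m (E * E') k l $$ (s,t) = (\<Sum>k'<11. (blk m E k k' * blk m E' k' l) $$ (s,t))"
    by (rule blk_mult_gen[OF E E' k l s t])
  also have "\<dots> = (\<Sum>k'<11. if k' = a then (blk m E k a * blk m E' a l) $$ (s,t) else 0)"
    by (rule sum.cong[OF refl]) (use z s t in auto)
  also have "\<dots> = (blk m E k a * blk m E' a l) $$ (s,t)" using a by simp
  finally show "blk m (E * E') k l $$ (s,t) = (blk m E k a * blk m E' a l) $$ (s,t)" .
qed auto

lemma blk_mult_two:
  assumes E: "(E::'k::field mat) \<in> carrier_mat (11*m) (11*m)" and E': "E' \<in> carrier_mat (11*m) (11*m)"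
    and k: "k < 11" and l: "l < 11" and a: "a < 11" and b: "b < 11" and ab: "a \<noteq> b"
    and z: "\<And>k'. k' < 11 \<Longrightarrow> k' \<noteq> a \<Longrightarrow> k' \<noteq> b \<Longrightarrow> blk m E k k' = 0\<^sub>m m m \<or> blk m E' k' l = 0\<^sub>m m m"
  shows "blk m (E * E') k l = blk m E k a * blk m E' a l + blk m E k b * blk m E' b l"
proof (rule eq_matI)
  fix s t assume "s < dim_row (blk m E k a * blk m E' a l + blk m E k b * blk m E' b l)"
    "t < dim_col (blk m E k a * blk m E' a l + blk m E k b * blk m E' b l)"
  hence s: "s < m" and t: "t < m" by auto
  let ?g = "\<lambda>k'. (blk m E k k' * blk m E' k' l) $$ (s,t)"
  have "blk m (E * E') k l $$ (s,t) = (\<Sum>k'<11. ?g k')"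
    by (rule blk_mult_gen[OF E E' k l s t])
  also have "\<dots> = (\<Sum>k'\<in>{a,b}. ?g k')"
  proof (rule sum.mono_neutral_right)
    show "\<forall>k'\<in>{..<11} - {a,b}. ?g k' = 0"
    proof
      fix k' assume "k' \<in> {..<11} - {a,b}"
      then have "k' < 11" "k' \<noteq> a" "k' \<noteq> b" by auto
      then show "?g k' = 0" using z[of k'] s t by auto
    qed
  qed (use a b in auto)
  also have "\<dots> = ?g a + ?g b" using ab by simp
  finally show "blk m (E * E') k l $$ (s,t) = (blk m E k a * blk m E' a l + blk m E k b * blk m E' b l) $$ (s,t)"
    using s t by simp
qed auto

lemma blk_recon:
  assumes E: "(E::'k::field mat) \<in> carrier_mat (11*m) (11*m)" and i: "i < 11*m" and j: "j < 11*m"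
  shows "E $$ (i,j) = blk m E (i div m) (j div m) $$ (i mod m, j mod m)"
proof -
  have m: "m > 0" using i by (cases m) auto
  show ?thesis using m by (simp add: blk_def)
qed

lemma add0_dims[simp]: "dim_row (X::'k::field mat) = m \<Longrightarrow> dim_col X = n \<Longrightarrow> 0\<^sub>m m n + X = X"
  "dim_row (X::'k::field mat) = m \<Longrightarrow> dim_col X = n \<Longrightarrow> X + 0\<^sub>m m n = X"
  by (auto intro!: eq_matI)

lemma tensor_nb:
  fixes A B :: "'k::field mat"
  assumes A: "A \<in> carrier_mat m m" and B: "B \<in> carrier_mat m m" and nb: "snd p \<noteq> bw"
    and c0: "(Cb p [] :: 'k mat) = pm L0"
  shows "tensor_rep 11 Cb m A B p = kr m L0 (1\<^sub>m m)"
proof (rule eq_matI)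
  fix i j assume i: "i < dim_row (kr m L0 (1\<^sub>m m) :: 'k mat)" and j: "j < dim_col (kr m L0 (1\<^sub>m m) :: 'k mat)"
  hence i': "i < 11*m" and j': "j < 11*m" by auto
  have m: "m > 0" using i' by (cases m) auto
  have di: "i div m < 11" "j div m < 11" using div_bound i' j' by auto
  let ?f = "\<lambda>w. (Cb p w :: 'k mat) $$ (i div m, j div m) * word_eval m A B w $$ (i mod m, j mod m)"
  have sub: "{w. (Cb p w :: 'k mat) \<noteq> 0\<^sub>m 11 11} \<subseteq> {[]}"
    using nb by (auto simp: Cb_def)
  have "sum ?f {w. (Cb p w :: 'k mat) \<noteq> 0\<^sub>m 11 11} = sum ?f {[]}"
    by (rule sum.mono_neutral_left) (use sub di in auto)
  also have "\<dots> = kr m L0 (1\<^sub>m m) $$ (i,j)"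
    using c0 di m i' j' by (simp add: kr_def)
  finally show "tensor_rep 11 Cb m A B p $$ (i,j) = kr m L0 (1\<^sub>m m) $$ (i,j)"
    using i' j' by (simp add: tensor_rep_def)
qed (auto simp: tensor_rep_def)

lemma tensor_b:
  fixes A B :: "'k::field mat"
  assumes A: "A \<in> carrier_mat m m" and B: "B \<in> carrier_mat m m" and b: "snd p = bw"
    and c0: "(Cb p [] :: 'k mat) = pm L0"
  shows "tensor_rep 11 Cb m A B p = kr m L0 (1\<^sub>m m) + kr m LX A + kr m LY B"
proof (rule eq_matI)
  fix i j assume i: "i < dim_row (kr m L0 (1\<^sub>m m) + kr m LX A + kr m LY B :: 'k mat)"
    and j: "j < dim_col (kr m L0 (1\<^sub>m m) + kr m LX A + kr m LY B :: 'k mat)"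
  hence i': "i < 11*m" and j': "j < 11*m" by auto
  have m: "m > 0" using i' by (cases m) auto
  have di: "i div m < 11" "j div m < 11" using div_bound i' j' by auto
  have md: "i mod m < m" "j mod m < m" using m by auto
  let ?f = "\<lambda>w. (Cb p w :: 'k mat) $$ (i div m, j div m) * word_eval m A B w $$ (i mod m, j mod m)"
  have sub: "{w. (Cb p w :: 'k mat) \<noteq> 0\<^sub>m 11 11} \<subseteq> {[], [True], [False]}"
  proof
    fix w assume "w \<in> {w. (Cb p w :: 'k mat) \<noteq> 0\<^sub>m 11 11}"
    hence "w = [] \<or> length w = 1" by (auto simp: Cb_def split: if_splits)
    then show "w \<in> {[], [True], [False]}"
    proof
      assume "w = []" thus ?thesis by simp
    next
      assume "length w = 1"
      then obtain c where "w = [c]" by (cases w) auto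
      then show ?thesis by (cases c) auto
    qed
  qed
  have "sum ?f {w. (Cb p w :: 'k mat) \<noteq> 0\<^sub>m 11 11} = sum ?f {[], [True], [False]}"
    by (rule sum.mono_neutral_left) (use sub di in auto)
  also have "\<dots> = ?f [] + ?f [True] + ?f [False]" by simp
  also have "\<dots> = (kr m L0 (1\<^sub>m m) + kr m LX A + kr m LY B) $$ (i,j)"
    using c0 di md m i' j' A B b by (simp add: kr_def Cb_def Xm_def)
  finally show "tensor_rep 11 Cb m A B p $$ (i,j) = (kr m L0 (1\<^sub>m m) + kr m LX A + kr m LY B) $$ (i,j)"
    using i' j' by (simp add: tensor_rep_def)
qed (auto simp: tensor_rep_def)

lemma geq:
  assumes E: "(E::'k::field mat) \<in> carrier_mat (11*m) (11*m)"
    and eq: "E * kr m L (1\<^sub>m m) = kr m L (1\<^sub>m m) * E"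
    and k: "k < 11" and l: "l < 11" and bL: "bnd L" and d1: "distinct (map fst L)" and d2: "distinct (map snd L)"
  shows "(case map_of (map prod.swap L) l of None \<Rightarrow> 0\<^sub>m m m | Some k' \<Rightarrow> blk m E k k')
       = (case map_of L k of None \<Rightarrow> 0\<^sub>m m m | Some k' \<Rightarrow> blk m E k' l)"
proof -
  have "blk m (E * kr m L (1\<^sub>m m)) k l = blk m (kr m L (1\<^sub>m m) * E) k l" using eq by simp
  moreover have "blk m (E * kr m L (1\<^sub>m m)) k l = (case map_of (map prod.swap L) l of None \<Rightarrow> 0\<^sub>m m m | Some k' \<Rightarrow> blk m E k k')"
    using blk_mult_kr[OF E _ k l bL d2, of "1\<^sub>m m"] by (cases "map_of (map prod.swap L) l") simp_all
  moreover have "blk m (kr m L (1\<^sub>m m) * E) k l = (case map_of L k of None \<Rightarrow> 0\<^sub>m m m | Some k' \<Rightarrow> blk m E k' l)"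
    using blk_kr_mult[OF E _ k l bL d1, of "1\<^sub>m m"] by (cases "map_of L k") simp_all
  ultimately show ?thesis by simp
qed

lemma beq:
  assumes E: "(E::'k::field mat) \<in> carrier_mat (11*m) (11*m)"
    and A: "A \<in> carrier_mat m m" and B: "B \<in> carrier_mat m m" and A': "A' \<in> carrier_mat m m" and B': "B' \<in> carrier_mat m m"
    and eq: "E * (kr m LB (1\<^sub>m m) + kr m LX A + kr m LY B) = (kr m LB (1\<^sub>m m) + kr m LX A' + kr m LY B') * E"
    and k: "k < 11" and l: "l < 11"
  shows "(case map_of (map prod.swap LB) l of None \<Rightarrow> 0\<^sub>m m m | Some k' \<Rightarrow> blk m E k k' * 1\<^sub>m m)
       + (case map_of (map prod.swap LX) l of None \<Rightarrow> 0\<^sub>m m m | Some k' \<Rightarrow> blk m E k k' * A)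
       + (case map_of (map prod.swap LY) l of None \<Rightarrow> 0\<^sub>m m m | Some k' \<Rightarrow> blk m E k k' * B)
     = (case map_of LB k of None \<Rightarrow> 0\<^sub>m m m | Some k' \<Rightarrow> 1\<^sub>m m * blk m E k' l)
       + (case map_of LX k of None \<Rightarrow> 0\<^sub>m m m | Some k' \<Rightarrow> A' * blk m E k' l)
       + (case map_of LY k of None \<Rightarrow> 0\<^sub>m m m | Some k' \<Rightarrow> B' * blk m E k' l)"
proof -
  have bs: "bnd LB" "bnd LX" "bnd LY" by (auto simp: bnd_def Ldefs)
  have ds: "distinct (map fst LB)" "distinct (map fst LX)" "distinct (map fst LY)"
    "distinct (map snd LB)" "distinct (map snd LX)" "distinct (map snd LY)" by (auto simp: Ldefs)
  have c: "kr m LB (1\<^sub>m m) \<in> carrier_mat (11*m) (11*m)" "kr m LX A \<in> carrier_mat (11*m) (11*m)"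
    "kr m LY B \<in> carrier_mat (11*m) (11*m)" "kr m LX A' \<in> carrier_mat (11*m) (11*m)" "kr m LY B' \<in> carrier_mat (11*m) (11*m)"
    by auto
  have lhs: "E * (kr m LB (1\<^sub>m m) + kr m LX A + kr m LY B) = E * kr m LB (1\<^sub>m m) + E * kr m LX A + E * kr m LY B"
  proof -
    have "E * (kr m LB (1\<^sub>m m) + kr m LX A + kr m LY B) = E * (kr m LB (1\<^sub>m m) + kr m LX A) + E * kr m LY B"
      by (rule mult_add_distrib_mat[OF E]) (use c in auto)
    also have "E * (kr m LB (1\<^sub>m m) + kr m LX A) = E * kr m LB (1\<^sub>m m) + E * kr m LX A"
      by (rule mult_add_distrib_mat[OF E]) (use c in auto)
    finally show ?thesis .
  qed
  have rhs: "(kr m LB (1\<^sub>m m) + kr m LX A' + kr m LY B') * E = kr m LB (1\<^sub>m m) * E + kr m LX A' * E + kr m LY B' * E"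
  proof -
    have "(kr m LB (1\<^sub>m m) + kr m LX A' + kr m LY B') * E = (kr m LB (1\<^sub>m m) + kr m LX A') * E + kr m LY B' * E"
      by (rule add_mult_distrib_mat[OF _ _ E]) (use c in auto)
    also have "(kr m LB (1\<^sub>m m) + kr m LX A') * E = kr m LB (1\<^sub>m m) * E + kr m LX A' * E"
      by (rule add_mult_distrib_mat[OF _ _ E]) (use c in auto)
    finally show ?thesis .
  qed
  have cc: "E * kr m LB (1\<^sub>m m) \<in> carrier_mat (11*m) (11*m)" "E * kr m LX A \<in> carrier_mat (11*m) (11*m)"
    "E * kr m LY B \<in> carrier_mat (11*m) (11*m)" "kr m LB (1\<^sub>m m) * E \<in> carrier_mat (11*m) (11*m)"
    "kr m LX A' * E \<in> carrier_mat (11*m) (11*m)" "kr m LY B' * E \<in> carrier_mat (11*m) (11*m)"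
    using E by (auto intro: mult_carrier_mat)
  have "blk m (E * kr m LB (1\<^sub>m m) + E * kr m LX A + E * kr m LY B) k l = blk m (kr m LB (1\<^sub>m m) * E + kr m LX A' * E + kr m LY B' * E) k l"
    using eq lhs rhs by simp
  moreover have "blk m (E * kr m LB (1\<^sub>m m) + E * kr m LX A + E * kr m LY B) k l
     = blk m (E * kr m LB (1\<^sub>m m)) k l + blk m (E * kr m LX A) k l + blk m (E * kr m LY B) k l"
  proof -
    have "blk m (E * kr m LB (1\<^sub>m m) + E * kr m LX A + E * kr m LY B) k l = blk m (E * kr m LB (1\<^sub>m m) + E * kr m LX A) k l + blk m (E * kr m LY B) k l"
      by (rule blk_add) (use cc k l in auto)
    also have "blk m (E * kr m LB (1\<^sub>m m) + E * kr m LX A) k l = blk m (E * kr m LB (1\<^sub>m m)) k l + blk m (E * kr m LX A) k l"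
      by (rule blk_add) (use cc k l in auto)
    finally show ?thesis .
  qed
  moreover have "blk m (kr m LB (1\<^sub>m m) * E + kr m LX A' * E + kr m LY B' * E) k l
     = blk m (kr m LB (1\<^sub>m m) * E) k l + blk m (kr m LX A' * E) k l + blk m (kr m LY B' * E) k l"
  proof -
    have "blk m (kr m LB (1\<^sub>m m) * E + kr m LX A' * E + kr m LY B' * E) k l = blk m (kr m LB (1\<^sub>m m) * E + kr m LX A' * E) k l + blk m (kr m LY B' * E) k l"
      by (rule blk_add) (use cc k l in auto)
    also have "blk m (kr m LB (1\<^sub>m m) * E + kr m LX A' * E) k l = blk m (kr m LB (1\<^sub>m m) * E) k l + blk m (kr m LX A' * E) k l"
      by (rule blk_add) (use cc k l in auto)
    finally show ?thesis .
  qed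
  ultimately show ?thesis
    using blk_mult_kr[OF E _ k l bs(1) ds(4), of "1\<^sub>m m"] blk_mult_kr[OF E A k l bs(2) ds(5)] blk_mult_kr[OF E B k l bs(3) ds(6)]
      blk_kr_mult[OF E _ k l bs(1) ds(1), of "1\<^sub>m m"] blk_kr_mult[OF E A' k l bs(2) ds(2)] blk_kr_mult[OF E B' k l bs(3) ds(3)]
    by simp
qed

lemma Cb_gens:
  "(Cb (1,[]) [] :: 'k::field mat) = pm LP1"
  "(Cb (3,[]) [] :: 'k::field mat) = pm LP3"
  "(Cb (4,[]) [] :: 'k::field mat) = pm LP4"
  "(Cb (1,[Arr_a 1, Arr_b 1]) [] :: 'k::field mat) = pm LE"
  "(Cb (1,[Arr_a 1, Arr_a 2]) [] :: 'k::field mat) = pm LA"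
  "(Cb (3,[Arr_b 2, Arr_b 1]) [] :: 'k::field mat) = pm LB"
  "(Cb (3,[Arr_a 3]) [] :: 'k::field mat) = pm LG"
  "(Cb (4,[Arr_b 3]) [] :: 'k::field mat) = pm LD"
  by (auto simp: Cb_simps pmsimps intro!: pm_eqI)

lemma vp_gens:
  "vpath 5 (vset {3,4}) (1,[])" "vpath 5 (vset {3,4}) (3,[])" "vpath 5 (vset {3,4}) (4,[])"
  "vpath 5 (vset {3,4}) (1,[Arr_a 1, Arr_b 1])" "vpath 5 (vset {3,4}) (1,[Arr_a 1, Arr_a 2])"
  "vpath 5 (vset {3,4}) (3,[Arr_b 2, Arr_b 1])" "vpath 5 (vset {3,4}) (3,[Arr_a 3])" "vpath 5 (vset {3,4}) (4,[Arr_b 3])"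
  by (auto simp: vpath_def vset_def path_src_def path_tgt_def arrow_ok_def)

lemma gen_eq:
  fixes E A B A' B' :: "'k::field mat"
  assumes A: "A \<in> carrier_mat m m" and B: "B \<in> carrier_mat m m" and A': "A' \<in> carrier_mat m m" and B': "B' \<in> carrier_mat m m"
    and h: "E * tensor_rep 11 Cb m A B p = tensor_rep 11 Cb m A' B' p * E"
    and nb: "snd p \<noteq> bw" and c0: "(Cb p [] :: 'k mat) = pm L"
  shows "E * kr m L (1\<^sub>m m) = kr m L (1\<^sub>m m) * E"
  using h tensor_nb[OF A B nb c0] tensor_nb[OF A' B' nb c0] by simp

lemma beta_eq:
  fixes E A B A' B' :: "'k::field mat"
  assumes A: "A \<in> carrier_mat m m" and B: "B \<in> carrier_mat m m" and A': "A' \<in> carrier_mat m m" and B': "B' \<in> carrier_mat m m"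
    and h: "E * tensor_rep 11 Cb m A B (3,[Arr_b 2, Arr_b 1]) = tensor_rep 11 Cb m A' B' (3,[Arr_b 2, Arr_b 1]) * E"
  shows "E * (kr m LB (1\<^sub>m m) + kr m LX A + kr m LY B) = (kr m LB (1\<^sub>m m) + kr m LX A' + kr m LY B') * E"
proof -
  have b: "snd (3::nat,[Arr_b 2, Arr_b 1]) = bw" by (simp add: bw_def)
  show ?thesis using h tensor_b[OF A B b Cb_gens(6)] tensor_b[OF A' B' b Cb_gens(6)] by simp
qed

lemma mapLP:
  "map_of (map prod.swap LP1) l = (if l < 4 then Some l else None)" "map_of LP1 k = (if k < 4 then Some k else None)"
  "map_of (map prod.swap LP3) l = (if 4 \<le> l \<and> l < 8 then Some l else None)" "map_of LP3 k = (if 4 \<le> k \<and> k < 8 then Some k else None)"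
  "map_of (map prod.swap LP4) l = (if 8 \<le> l \<and> l < 11 then Some l else None)" "map_of LP4 k = (if 8 \<le> k \<and> k < 11 then Some k else None)"
  by (auto simp: Ldefs)

lemma case_if_opt: "(case (if c then Some x else None) of None \<Rightarrow> a | Some y \<Rightarrow> f y) = (if c then f x else a)"
  by simp

definition grp :: "nat \<Rightarrow> nat" where "grp k = (if k < 4 then 1 else if k < 8 then 3 else 4)"

definition Npos :: "(nat \<times> nat) set" where
  "Npos = set [(2,0),(2,1),(3,0),(3,1),(6,4),(6,5),(7,4),(7,5),(10,8),(10,9)]"

lemma analysis:
  fixes E A B A' B' :: "'k::field mat"
  assumes E: "E \<in> carrier_mat (11*m) (11*m)"
    and A: "A \<in> carrier_mat m m" and B: "B \<in> carrier_mat m m" and A': "A' \<in> carrier_mat m m" and B': "B' \<in> carrier_mat m m"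
    and h: "\<And>p. vpath 5 (vset {3,4}) p \<Longrightarrow> E * tensor_rep 11 Cb m A B p = tensor_rep 11 Cb m A' B' p * E"
  shows "blk m E 0 0 * A = A' * blk m E 0 0 \<and> blk m E 0 0 * B = B' * blk m E 0 0 \<and>
    (\<forall>k<11. \<forall>l<11. (k,l) \<notin> Npos \<longrightarrow> blk m E k l = (if k = l then blk m E 0 0 else 0\<^sub>m m m))"
proof -
  have nbs: "snd (1::nat,[]::arrow list) \<noteq> bw" "snd (3::nat,[]::arrow list) \<noteq> bw" "snd (4::nat,[]::arrow list) \<noteq> bw"
    "snd (1::nat,[Arr_a 1, Arr_b 1]) \<noteq> bw" "snd (1::nat,[Arr_a 1, Arr_a 2]) \<noteq> bw"
    "snd (3::nat,[Arr_a 3]) \<noteq> bw" "snd (4::nat,[Arr_b 3]) \<noteq> bw" by (auto simp: bw_def)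
  have g1: "E * kr m LP1 (1\<^sub>m m) = kr m LP1 (1\<^sub>m m) * E" by (rule gen_eq[OF A B A' B' h[OF vp_gens(1)] nbs(1) Cb_gens(1)])
  have g3: "E * kr m LP3 (1\<^sub>m m) = kr m LP3 (1\<^sub>m m) * E" by (rule gen_eq[OF A B A' B' h[OF vp_gens(2)] nbs(2) Cb_gens(2)])
  have g4: "E * kr m LP4 (1\<^sub>m m) = kr m LP4 (1\<^sub>m m) * E" by (rule gen_eq[OF A B A' B' h[OF vp_gens(3)] nbs(3) Cb_gens(3)])
  have gE: "E * kr m LE (1\<^sub>m m) = kr m LE (1\<^sub>m m) * E" by (rule gen_eq[OF A B A' B' h[OF vp_gens(4)] nbs(4) Cb_gens(4)])
  have gA: "E * kr m LA (1\<^sub>m m) = kr m LA (1\<^sub>m m) * E" by (rule gen_eq[OF A B A' B' h[OF vp_gens(5)] nbs(5) Cb_gens(5)])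
  have gG: "E * kr m LG (1\<^sub>m m) = kr m LG (1\<^sub>m m) * E" by (rule gen_eq[OF A B A' B' h[OF vp_gens(7)] nbs(6) Cb_gens(7)])
  have gD: "E * kr m LD (1\<^sub>m m) = kr m LD (1\<^sub>m m) * E" by (rule gen_eq[OF A B A' B' h[OF vp_gens(8)] nbs(7) Cb_gens(8)])
  have gB: "E * (kr m LB (1\<^sub>m m) + kr m LX A + kr m LY B) = (kr m LB (1\<^sub>m m) + kr m LX A' + kr m LY B') * E"
    by (rule beta_eq[OF A B A' B' h[OF vp_gens(6)]])
  have bd: "bnd LP1" "bnd LP3" "bnd LP4" "bnd LE" "bnd LA" "bnd LG" "bnd LD" by (auto simp: bnd_def Ldefs)
  have d1: "distinct (map fst LP1)" "distinct (map fst LP3)" "distinct (map fst LP4)" "distinct (map fst LE)"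
    "distinct (map fst LA)" "distinct (map fst LG)" "distinct (map fst LD)" by (auto simp: Ldefs)
  have d2: "distinct (map snd LP1)" "distinct (map snd LP3)" "distinct (map snd LP4)" "distinct (map snd LE)"
    "distinct (map snd LA)" "distinct (map snd LG)" "distinct (map snd LD)" by (auto simp: Ldefs)
  note qP1 = geq[OF E g1 _ _ bd(1) d1(1) d2(1)]
  note qP3 = geq[OF E g3 _ _ bd(2) d1(2) d2(2)]
  note qP4 = geq[OF E g4 _ _ bd(3) d1(3) d2(3)]
  note qE = geq[OF E gE _ _ bd(4) d1(4) d2(4)]
  note qA = geq[OF E gA _ _ bd(5) d1(5) d2(5)]
  note qG = geq[OF E gG _ _ bd(6) d1(6) d2(6)]
  note qD = geq[OF E gD _ _ bd(7) d1(7) d2(7)]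
  note qB = beq[OF E A B A' B' gB]
  have dA: "dim_row A = m" "dim_col A = m" "dim_row B = m" "dim_col B = m"
    "dim_row A' = m" "dim_col A' = m" "dim_row B' = m" "dim_col B' = m" using A B A' B' by auto
  define F where "F = blk m E 0 0"
  have e02: "blk m E 0 2 = 0\<^sub>m m m" using qE[of 0 0] by (simp add: LE_def)
  have e03: "blk m E 0 3 = 0\<^sub>m m m" using qE[of 0 1] by (simp add: LE_def)
  have e12: "blk m E 1 2 = 0\<^sub>m m m" using qE[of 1 0] by (simp add: LE_def)
  have e13: "blk m E 1 3 = 0\<^sub>m m m" using qE[of 1 1] by (simp add: LE_def)
  have e22: "blk m E 2 2 = blk m E 0 0" using qE[of 2 0] by (simp add: LE_def)
  have e23: "blk m E 2 3 = blk m E 0 1" using qE[of 2 1] by (simp add: LE_def)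
  have e32: "blk m E 3 2 = blk m E 1 0" using qE[of 3 0] by (simp add: LE_def)
  have e33: "blk m E 3 3 = blk m E 1 1" using qE[of 3 1] by (simp add: LE_def)
  have a46: "blk m E 4 6 = 0\<^sub>m m m" using qA[of 4 0] by (simp add: LA_def)
  have a47: "blk m E 4 7 = 0\<^sub>m m m" using qA[of 4 1] by (simp add: LA_def)
  have a56: "blk m E 5 6 = 0\<^sub>m m m" using qA[of 5 0] by (simp add: LA_def)
  have a57: "blk m E 5 7 = 0\<^sub>m m m" using qA[of 5 1] by (simp add: LA_def)
  have a66: "blk m E 6 6 = blk m E 0 0" using qA[of 6 0] by (simp add: LA_def)
  have a67: "blk m E 6 7 = blk m E 0 1" using qA[of 6 1] by (simp add: LA_def)
  have a76: "blk m E 7 6 = blk m E 1 0" using qA[of 7 0] by (simp add: LA_def)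
  have a77: "blk m E 7 7 = blk m E 1 1" using qA[of 7 1] by (simp add: LA_def)
  have g88: "blk m E 8 8 = blk m E 4 4" using qG[of 8 4] by (simp add: LG_def)
  have g89: "blk m E 8 9 = blk m E 4 5" using qG[of 8 5] by (simp add: LG_def)
  have g98: "blk m E 9 8 = blk m E 5 4" using qG[of 9 4] by (simp add: LG_def)
  have g99: "blk m E 9 9 = blk m E 5 5" using qG[of 9 5] by (simp add: LG_def)
  have g1010: "blk m E 10 10 = blk m E 7 7" using qG[of 10 7] by (simp add: LG_def)
  have g76: "blk m E 7 6 = 0\<^sub>m m m" using qG[of 10 6] by (simp add: LG_def)
  have d66: "blk m E 6 6 = blk m E 8 8" using qD[of 6 8] by (simp add: LD_def)
  have d67: "blk m E 6 7 = blk m E 8 9" using qD[of 6 9] by (simp add: LD_def)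
  have d76: "blk m E 7 6 = blk m E 9 8" using qD[of 7 8] by (simp add: LD_def)
  have d77: "blk m E 7 7 = blk m E 9 9" using qD[of 7 9] by (simp add: LD_def)
  have d810: "blk m E 8 10 = 0\<^sub>m m m" using qD[of 6 10] by (simp add: LD_def)
  have d910: "blk m E 9 10 = 0\<^sub>m m m" using qD[of 7 10] by (simp add: LD_def)
  have b35: "blk m E 3 2 * B = blk m E 4 5" using qB[of 3 5] dA by (simp add: LB_def LX_def LY_def)
  have b34: "blk m E 3 3 + blk m E 3 2 * A = blk m E 4 4" using qB[of 3 4] dA by (simp add: LB_def LX_def LY_def)
  have b24: "blk m E 2 3 + blk m E 2 2 * A = A' * blk m E 4 4 + B' * blk m E 5 4" using qB[of 2 4] dA by (simp add: LB_def LX_def LY_def)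
  have b25: "blk m E 2 2 * B = A' * blk m E 4 5 + B' * blk m E 5 5" using qB[of 2 5] dA by (simp add: LB_def LX_def LY_def)
  have z10: "blk m E 1 0 = 0\<^sub>m m m" using a76 g76 by simp
  have z32: "blk m E 3 2 = 0\<^sub>m m m" using e32 z10 by simp
  have z98: "blk m E 9 8 = 0\<^sub>m m m" using d76 g76 by simp
  have z54: "blk m E 5 4 = 0\<^sub>m m m" using g98 z98 by simp
  have z45: "blk m E 4 5 = 0\<^sub>m m m" using b35 z32 dA by simp
  have z89: "blk m E 8 9 = 0\<^sub>m m m" using g89 z45 by simp
  have z67: "blk m E 6 7 = 0\<^sub>m m m" using d67 z89 by simp
  have z01: "blk m E 0 1 = 0\<^sub>m m m" using a67 z67 by simp
  have z23: "blk m E 2 3 = 0\<^sub>m m m" using e23 z01 by simp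
  have f00: "blk m E 0 0 = F" using F_def by simp
  have f22: "blk m E 2 2 = F" using e22 f00 by simp
  have f66: "blk m E 6 6 = F" using a66 f00 by simp
  have f88: "blk m E 8 8 = F" using d66 f66 by simp
  have f44: "blk m E 4 4 = F" using g88 f88 by simp
  have f33: "blk m E 3 3 = F" using b34 z32 f44 dA by simp
  have f11: "blk m E 1 1 = F" using e33 f33 by simp
  have f77: "blk m E 7 7 = F" using a77 f11 by simp
  have f99: "blk m E 9 9 = F" using d77 f77 by simp
  have f55: "blk m E 5 5 = F" using g99 f99 by simp
  have f1010: "blk m E 10 10 = F" using g1010 f77 by simp
  have dF: "dim_row F = m" "dim_col F = m" by (simp_all add: F_def)
  have FA: "F * A = A' * F" using b24 z23 f22 f44 z54 dA dF by simp
  have FB: "F * B = B' * F" using b25 f22 z45 f55 dA dF by simp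
  have cross: "\<And>k l. k < 11 \<Longrightarrow> l < 11 \<Longrightarrow> grp k \<noteq> grp l \<Longrightarrow> blk m E k l = 0\<^sub>m m m"
  proof -
    fix k l :: nat assume k: "k < 11" and l: "l < 11" and g: "grp k \<noteq> grp l"
    have p1: "(if l < 4 then blk m E k l else 0\<^sub>m m m) = (if k < 4 then blk m E k l else 0\<^sub>m m m)"
      using qP1[OF k l] by (simp only: mapLP case_if_opt)
    have p3: "(if 4 \<le> l \<and> l < 8 then blk m E k l else 0\<^sub>m m m) = (if 4 \<le> k \<and> k < 8 then blk m E k l else 0\<^sub>m m m)"
      using qP3[OF k l] by (simp only: mapLP case_if_opt)
    have p4: "(if 8 \<le> l \<and> l < 11 then blk m E k l else 0\<^sub>m m m) = (if 8 \<le> k \<and> k < 11 then blk m E k l else 0\<^sub>m m m)"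
      using qP4[OF k l] by (simp only: mapLP case_if_opt)
    show "blk m E k l = 0\<^sub>m m m"
    proof (cases "k < 4")
      case True
      then have "\<not> l < 4" using g by (auto simp: grp_def)
      then show ?thesis using p1 True by simp
    next
      case False
      show ?thesis
      proof (cases "k < 8")
        case True
        then have nl: "\<not> (4 \<le> l \<and> l < 8)" using g False by (auto simp: grp_def)
        have nk: "4 \<le> k \<and> k < 8" using True False by simp
        show ?thesis using p3 unfolding if_not_P[OF nl] if_P[OF nk] by simp
      next
        case False2: False
        then have nl: "\<not> (8 \<le> l \<and> l < 11)" using g False k by (auto simp: grp_def)
        have nk: "8 \<le> k \<and> k < 11" using False2 k by simp
        show ?thesis using p4 unfolding if_not_P[OF nl] if_P[OF nk] by simp
      qed
    qed
  qed
  have all: "\<forall>k<11. \<forall>l<11. (k,l) \<notin> Npos \<longrightarrow> blk m E k l = (if k = l then F else 0\<^sub>m m m)"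
  proof (intro allI impI)
    fix k l :: nat assume k: "k < 11" and l: "l < 11" and np: "(k,l) \<notin> Npos"
    show "blk m E k l = (if k = l then F else 0\<^sub>m m m)"
    proof (cases "grp k = grp l")
      case False
      then have "k \<noteq> l" by auto
      then show ?thesis using cross[OF k l False] by simp
    next
      case True
      then have "(k < 4 \<and> l < 4) \<or> (4 \<le> k \<and> k < 8 \<and> 4 \<le> l \<and> l < 8) \<or> (8 \<le> k \<and> 8 \<le> l)"
        by (auto simp: grp_def split: if_splits)
      then consider (g1) "k < 4" "l < 4" | (g3) "4 \<le> k" "k < 8" "4 \<le> l" "l < 8" | (g4) "8 \<le> k" "8 \<le> l" by blast
      then show ?thesis
      proof cases
        case g1
        then have "k = 0 \<or> k = 1 \<or> k = 2 \<or> k = 3" "l = 0 \<or> l = 1 \<or> l = 2 \<or> l = 3" by auto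
        then show ?thesis using np e02 e03 e12 e13 z10 z32 z01 z23 f00 f11 f22 f33
          by (elim disjE) (simp_all add: Npos_def)
      next
        case g3
        then have "k = 4 \<or> k = 5 \<or> k = 6 \<or> k = 7" "l = 4 \<or> l = 5 \<or> l = 6 \<or> l = 7" by auto
        then show ?thesis using np a46 a47 a56 a57 g76 z54 z45 z67 f44 f55 f66 f77
          by (elim disjE) (simp_all add: Npos_def)
      next
        case g4
        then have "k = 8 \<or> k = 9 \<or> k = 10" "l = 8 \<or> l = 9 \<or> l = 10" using k l by auto
        then show ?thesis using np d810 d910 z98 z89 f88 f99 f1010
          by (elim disjE) (simp_all add: Npos_def)
      qed
    qed
  qed
  show ?thesis using FA FB all F_def by simp
qed

lemma Npos_disj: "(t,k') \<in> Npos \<Longrightarrow> (k', s) \<notin> Npos" by (auto simp: Npos_def)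
lemma Npos_prop: "(t,s) \<in> Npos \<Longrightarrow> t < 11 \<and> s < 11 \<and> t \<noteq> s \<and> (t,t) \<notin> Npos \<and> (s,s) \<notin> Npos"
  by (auto simp: Npos_def)
lemma Npos_row0: "(0, k) \<notin> Npos" by (auto simp: Npos_def)

lemma x_eq_2x: "(N::'k::field mat) = N + N \<Longrightarrow> N = 0\<^sub>m (dim_row N) (dim_col N)"
proof (rule eq_matI)
  fix i j assume h: "N = N + N" and i: "i < dim_row (0\<^sub>m (dim_row N) (dim_col N) :: 'k mat)" and j: "j < dim_col (0\<^sub>m (dim_row N) (dim_col N) :: 'k mat)"
  have "N $$ (i,j) = (N + N) $$ (i,j)" using h by simp
  also have "\<dots> = N $$ (i,j) + N $$ (i,j)" using i j by simp
  finally have "N $$ (i,j) = N $$ (i,j) + N $$ (i,j)" .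
  then have "N $$ (i,j) = 0" by (metis add_cancel_right_right)
  then show "N $$ (i,j) = 0\<^sub>m (dim_row N) (dim_col N) $$ (i,j)" using i j by simp
qed auto

lemma blocks_final:
  fixes E F :: "'k::field mat"
  assumes E: "E \<in> carrier_mat (11*m) (11*m)" and F: "F \<in> carrier_mat m m"
    and hb: "\<forall>k<11. \<forall>l<11. (k,l) \<notin> Npos \<longrightarrow> blk m E k l = (if k = l then F else 0\<^sub>m m m)"
    and EE: "E * E = E" and F01: "F = 0\<^sub>m m m \<or> F = 1\<^sub>m m"
  shows "E = 0\<^sub>m (11*m) (11*m) \<or> E = 1\<^sub>m (11*m)"
proof -
  have dF: "dim_row F = m" "dim_col F = m" using F by auto
  have N0: "\<And>t s. (t,s) \<in> Npos \<Longrightarrow> blk m E t s = 0\<^sub>m m m"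
  proof -
    fix t s assume ts: "(t,s) \<in> Npos"
    note P = Npos_prop[OF ts]
    have "blk m (E * E) t s = blk m E t t * blk m E t s + blk m E t s * blk m E s s"
    proof (rule blk_mult_two[OF E E])
      fix k' assume k': "k' < 11" "k' \<noteq> t" "k' \<noteq> s"
      show "blk m E t k' = 0\<^sub>m m m \<or> blk m E k' s = 0\<^sub>m m m"
      proof (cases "(t,k') \<in> Npos")
        case True
        then have "(k',s) \<notin> Npos" by (rule Npos_disj)
        then show ?thesis using hb k' P by simp
      next
        case False
        then show ?thesis using hb k' P by simp
      qed
    qed (use P in auto)
    then have eq: "blk m E t s = F * blk m E t s + blk m E t s * F" using EE hb P by simp
    from F01 show "blk m E t s = 0\<^sub>m m m"
    proof
      assume "F = 0\<^sub>m m m"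
      then show ?thesis using eq by simp
    next
      assume "F = 1\<^sub>m m"
      then have "blk m E t s = blk m E t s + blk m E t s" using eq by simp
      then show ?thesis using x_eq_2x by fastforce
    qed
  qed
  have all: "\<And>k l. k < 11 \<Longrightarrow> l < 11 \<Longrightarrow> blk m E k l = (if k = l then F else 0\<^sub>m m m)"
  proof -
    fix k l :: nat assume k: "k < 11" and l: "l < 11"
    show "blk m E k l = (if k = l then F else 0\<^sub>m m m)"
    proof (cases "(k,l) \<in> Npos")
      case True
      then show ?thesis using N0 Npos_prop[OF True] by simp
    next
      case False
      then show ?thesis using hb k l by simp
    qed
  qed
  have ent: "\<And>i j. i < 11*m \<Longrightarrow> j < 11*m \<Longrightarrow> E $$ (i,j) = (if i div m = j div m then F $$ (i mod m, j mod m) else 0)"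
  proof -
    fix i j assume i: "i < 11*m" and j: "j < 11*m"
    have m: "m > 0" using i by (cases m) auto
    have "E $$ (i,j) = blk m E (i div m) (j div m) $$ (i mod m, j mod m)" by (rule blk_recon[OF E i j])
    also have "\<dots> = (if i div m = j div m then F $$ (i mod m, j mod m) else 0)"
      using all[OF div_bound[OF i] div_bound[OF j]] m by simp
    finally show "E $$ (i,j) = (if i div m = j div m then F $$ (i mod m, j mod m) else 0)" .
  qed
  from F01 show ?thesis
  proof
    assume F0: "F = 0\<^sub>m m m"
    have "E = 0\<^sub>m (11*m) (11*m)"
    proof (rule eq_matI)
      fix i j assume "i < dim_row (0\<^sub>m (11*m) (11*m) :: 'k mat)" "j < dim_col (0\<^sub>m (11*m) (11*m) :: 'k mat)"
      then have i: "i < 11*m" and j: "j < 11*m" by auto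
      have m: "m > 0" using i by (cases m) auto
      show "E $$ (i,j) = 0\<^sub>m (11*m) (11*m) $$ (i,j)" using ent[OF i j] F0 i j m by simp
    qed (use E in auto)
    then show ?thesis by simp
  next
    assume F1: "F = 1\<^sub>m m"
    have "E = 1\<^sub>m (11*m)"
    proof (rule eq_matI)
      fix i j assume "i < dim_row (1\<^sub>m (11*m) :: 'k mat)" "j < dim_col (1\<^sub>m (11*m) :: 'k mat)"
      then have i: "i < 11*m" and j: "j < 11*m" by auto
      have m: "m > 0" using i by (cases m) auto
      have "(i div m = j div m \<and> i mod m = j mod m) \<longleftrightarrow> i = j"
        by (metis div_mult_mod_eq)
      then show "E $$ (i,j) = 1\<^sub>m (11*m) $$ (i,j)" using ent[OF i j] F1 i j m by auto
    qed (use E in auto)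
    then show ?thesis by simp
  qed
qed

lemma row0_mult:
  fixes E E' F :: "'k::field mat"
  assumes E: "E \<in> carrier_mat (11*m) (11*m)" and E': "E' \<in> carrier_mat (11*m) (11*m)"
    and hb: "\<forall>k<11. \<forall>l<11. (k,l) \<notin> Npos \<longrightarrow> blk m E k l = (if k = l then F else 0\<^sub>m m m)"
  shows "blk m (E * E') 0 0 = blk m E 0 0 * blk m E' 0 0"
proof (rule blk_mult_single[OF E E'])
  fix k' :: nat assume "k' < 11" "k' \<noteq> 0"
  then show "blk m E 0 k' = 0\<^sub>m m m" using hb Npos_row0[of k'] by simp
qed auto

lemma assoc4:
  assumes "(A::'k::field mat) \<in> carrier_mat n n" "B \<in> carrier_mat n n" "C \<in> carrier_mat n n" "D \<in> carrier_mat n n"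
  shows "A * B * (C * D) = A * (B * C) * D"
proof -
  have "A * B * (C * D) = A * (B * (C * D))" by (rule assoc_mult_mat[of _ n n _ n _ n]) (use assms in auto)
  also have "B * (C * D) = B * C * D" by (rule assoc_mult_mat[of _ n n _ n _ n, symmetric]) (use assms in auto)
  also have "A * (B * C * D) = A * (B * C) * D" by (rule assoc_mult_mat[of _ n n _ n _ n, symmetric]) (use assms in auto)
  finally show ?thesis .
qed

lemma assoc3:
  assumes "(A::'k::field mat) \<in> carrier_mat n n" "B \<in> carrier_mat n n" "C \<in> carrier_mat n n"
  shows "A * B * C = A * (B * C)"
  by (rule assoc_mult_mat[of _ n n _ n _ n]) (use assms in auto)

lemma tensor_carrier: "tensor_rep r C m A B p \<in> carrier_mat (r*m) (r*m)"
  by (simp add: tensor_rep_def)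

theorem lemma4:
  shows "wild 5 {3, 4} TYPE('k::alg_closed_field)"
  unfolding wild_def
proof (intro exI conjI allI impI)
  show "is_bimod 5 {3,4} 11 (Cb :: path \<Rightarrow> bool list \<Rightarrow> 'k mat)" by (rule Cb_bimod)
next
  fix m and A B :: "'k mat"
  assume A: "A \<in> carrier_mat m m" and B: "B \<in> carrier_mat m m" and ind: "kxy_indec m A B"
  have m: "m > 0" using ind by (simp add: kxy_indec_def)
  show "rep_indec 5 {3,4} (11*m) (tensor_rep 11 Cb m A B)"
    unfolding rep_indec_def
  proof (intro conjI allI impI)
    show "11*m > 0" using m by simp
  next
    fix E :: "'k mat"
    assume E: "E \<in> carrier_mat (11*m) (11*m)"
      and com: "\<forall>p. vpath 5 (vset {3,4}) p \<longrightarrow> E * tensor_rep 11 Cb m A B p = tensor_rep 11 Cb m A B p * E"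
      and EE: "E * E = E"
    have an: "blk m E 0 0 * A = A * blk m E 0 0 \<and> blk m E 0 0 * B = B * blk m E 0 0 \<and>
      (\<forall>k<11. \<forall>l<11. (k,l) \<notin> Npos \<longrightarrow> blk m E k l = (if k = l then blk m E 0 0 else 0\<^sub>m m m))"
      by (rule analysis[OF E A B A B]) (use com in blast)
    define F where "F = blk m E 0 0"
    have hb: "\<forall>k<11. \<forall>l<11. (k,l) \<notin> Npos \<longrightarrow> blk m E k l = (if k = l then F else 0\<^sub>m m m)"
      using an F_def by simp
    have FF: "F * F = F"
      using row0_mult[OF E E hb] EE F_def by simp
    have F01: "F = 0\<^sub>m m m \<or> F = 1\<^sub>m m"
      using ind an FF F_def unfolding kxy_indec_def by auto
    show "E = 0\<^sub>m (11*m) (11*m) \<or> E = 1\<^sub>m (11*m)"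
      by (rule blocks_final[OF E _ hb EE F01]) (simp add: F_def)
  qed
next
  fix m and A B :: "'k mat" and m' and A' B' :: "'k mat"
  assume A: "A \<in> carrier_mat m m" and B: "B \<in> carrier_mat m m"
    and A': "A' \<in> carrier_mat m' m'" and B': "B' \<in> carrier_mat m' m'"
    and iso: "rep_iso 5 {3,4} (11*m) (tensor_rep 11 Cb m A B) (11*m') (tensor_rep 11 Cb m' A' B')"
  have mm: "m' = m" using iso by (simp add: rep_iso_def)
  obtain S T where S: "S \<in> carrier_mat (11*m) (11*m)" and T: "T \<in> carrier_mat (11*m) (11*m)"
    and ST: "S * T = 1\<^sub>m (11*m)" and TS: "T * S = 1\<^sub>m (11*m)"
    and int: "\<And>p. vpath 5 (vset {3,4}) p \<Longrightarrow> S * tensor_rep 11 Cb m A B p = tensor_rep 11 Cb m A' B' p * S"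
    using iso mm unfolding rep_iso_def by blast
  have A2: "A' \<in> carrier_mat m m" and B2: "B' \<in> carrier_mat m m" using A' B' mm by auto
  show "kxy_iso m A B m' A' B'"
  proof (cases "m = 0")
    case True
    show ?thesis unfolding kxy_iso_def
      by (rule conjI[OF mm[symmetric]], rule exI[of _ "1\<^sub>m m"], rule exI[of _ "1\<^sub>m m"])
         (use True A B A2 B2 in \<open>auto intro!: eq_matI\<close>)
  next
    case False
    have intT: "\<And>p. vpath 5 (vset {3,4}) p \<Longrightarrow> T * tensor_rep 11 Cb m A' B' p = tensor_rep 11 Cb m A B p * T"
    proof -
      fix p assume vp: "vpath 5 (vset {3,4}) p"
      let ?R = "tensor_rep 11 Cb m A B p" and ?R' = "tensor_rep 11 Cb m A' B' p"
      have R: "?R \<in> carrier_mat (11*m) (11*m)" and R': "?R' \<in> carrier_mat (11*m) (11*m)"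
        using tensor_carrier by blast+
      have "T * ?R' = T * ?R' * (S * T)" using ST T R' by simp
      also have "\<dots> = T * (?R' * S) * T" by (rule assoc4[OF T R' S T])
      also have "\<dots> = T * (S * ?R) * T" using int[OF vp] by simp
      also have "\<dots> = (T * S) * ?R * T" using assoc3[OF T S R] by simp
      also have "\<dots> = ?R * T" using TS R T by simp
      finally show "T * ?R' = ?R * T" .
    qed
    have anS: "blk m S 0 0 * A = A' * blk m S 0 0 \<and> blk m S 0 0 * B = B' * blk m S 0 0 \<and>
      (\<forall>k<11. \<forall>l<11. (k,l) \<notin> Npos \<longrightarrow> blk m S k l = (if k = l then blk m S 0 0 else 0\<^sub>m m m))"
      by (rule analysis[OF S A B A2 B2 int])
    have anT: "blk m T 0 0 * A' = A * blk m T 0 0 \<and> blk m T 0 0 * B' = B * blk m T 0 0 \<and>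
      (\<forall>k<11. \<forall>l<11. (k,l) \<notin> Npos \<longrightarrow> blk m T k l = (if k = l then blk m T 0 0 else 0\<^sub>m m m))"
      by (rule analysis[OF T A2 B2 A B intT])
    have hS: "\<forall>k<11. \<forall>l<11. (k,l) \<notin> Npos \<longrightarrow> blk m S k l = (if k = l then blk m S 0 0 else 0\<^sub>m m m)" using anS by blast
    have hT: "\<forall>k<11. \<forall>l<11. (k,l) \<notin> Npos \<longrightarrow> blk m T k l = (if k = l then blk m T 0 0 else 0\<^sub>m m m)" using anT by blast
    have one: "blk m (1\<^sub>m (11*m)) 0 0 = (1\<^sub>m m :: 'k mat)"
    proof (rule eq_matI)
      fix s t assume "s < dim_row (1\<^sub>m m :: 'k mat)" "t < dim_col (1\<^sub>m m :: 'k mat)"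
      then have s: "s < m" and t: "t < m" by auto
      have "s < 11*m" "t < 11*m" using s t by auto
      then show "blk m (1\<^sub>m (11*m)) 0 0 $$ (s,t) = (1\<^sub>m m :: 'k mat) $$ (s,t)" using s t by (simp add: blk_def)
    qed auto
    have FG: "blk m S 0 0 * blk m T 0 0 = 1\<^sub>m m" using row0_mult[OF S T hS] ST one by simp
    have GF: "blk m T 0 0 * blk m S 0 0 = 1\<^sub>m m" using row0_mult[OF T S hT] TS one by simp
    show ?thesis unfolding kxy_iso_def
      using mm FG GF anS by (intro conjI exI[of _ "blk m S 0 0"] exI[of _ "blk m T 0 0"]) auto
  qed
qed

end
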